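(* Let $\varphi:\mathbb{R}^n\to\mathbb{R}$ be upper-$\mathcal{C}^2$ on $\mathbb{R}^n$ with $\inf_{x\in\mathbb{R}^n}\varphi(x)>-\infty$, and consider the Nonmonotone Subgradient Method described in the context, with parameters $\tau_{\min}>0$, $\sigma,\beta\in{]0,1[}$. Suppose that: (a) there exists a constant $a>0$ such that $\langle w_k,d_k\rangle \leq -a \|d_k\|^2$ for all $k \in \mathbb{N}$; (b) for any bounded subsequence $(x_{k_j})_{j\in\mathbb{N}}$ generated by the method, there is a constant $b>0$ such that $\| w_{k_j}\| \leq b \| d_{k_j}\|$ for all $j \in \mathbb{N}$; (c) there exists an integer $m \geq 0$ such that $0\leq m_{k+1} \leq \min\{ m_{k }+1, m \}$ for all $k \in \mathbb{N}$. Then, for any initial point $x_0\in\mathbb{R}^n$, either the method stops at a stationary point after a finite number of iterations, or it produces a sequence $(x_{k})_{k\in\mathbb{N}}$ such that, if $\sup_{k\in\mathbb{N}}\tau_k<+\infty$, the following hold: (i) If $(x_{k_j})_{j\in\mathbb{N}}$ is a bounded subsequence of $(x_k)_{k\in\mathbb{N}}$, then $\inf_{j\in\mathbb{N}} \tau_{k_j} >0$; moreover $\lim_{j \to \infty } \|x_{k_{j}+1}-x_{k_j}\|= 0$, $\lim_{j \to \infty } \|w_{k_j}\| =0$, $\lim_{j \to \infty } \| d_{k_j}\| =0$ and $\lim_{j \to \infty} \varphi(x_{k_j}) = \lim_{k \to \infty} \varphi(x_{\ell( k)})$. (ii) If the entire sequence $(x_k)_{k\in\mathbb{N}}$ is bounded,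 then its set of accumulation points is nonempty, closed and connected, and there exists $c>0$ such that $$\min_{ 0 \leq j \leq k} \left\{ \| x_{j+1} - x_{j}\| + \| w_j\| + \| d_j\|\right\} \leq \frac{ c}{ \sqrt{ k+1}}\quad \text{for all } k \geq 0.$$ (iii) Any accumulation point of $(x_k)_{k\in\mathbb{N}}$ is a stationary point of $\varphi$. (iv) If $(x_k)_{k\in\mathbb{N}}$ is bounded and has an isolated accumulation point, then the entire sequence converges to a stationary point of $\varphi$.
   Context: Upper-$\mathcal{C}^2$: $\varphi$ is upper-$\mathcal{C}^2$ on $\mathbb{R}^n$ if on some neighborhood $V$ of each $\bar x$ there is a representation $\varphi(x)=\min_{c\in C}\varphi_c(x)$ with $C$ compact (in some topological space), each $\varphi_c$ of class $\mathcal{C}^2$ on $V$, and $\varphi_c$ and its first- and second-order partial derivatives continuous in $(x,c)\in V\times C$; such $\varphi$ is locally Lipschitz. $\partial\varphi$ is the Clarke subdifferential, and $\bar x$ is stationary if $0\in\partial\varphi(\bar x)$. For $a\in\mathbb{R}$, $[a]^+=\max\{a,0\}$. Nonmonotone Subgradient Method: given $x_0\in\mathbb{R}^n$, $\tau_{\min}>0$, $\sigma,\beta\in{]0,1[}$, for $k=0,1,\ldots$: (1) take $w_k\in\partial\varphi(x_k)$; if $w_k=0$, stop and return $x_k$. (2) Choose any $d_k\in\mathbb{R}^n\setminus\{0\}$ with $\langle w_k,d_k\rangle<0$. (3) Take any $\overline{\tau}_k\ge\tau_{\min}$, set $\tau_k:=\overline{\tau}_k$, and choose a memory parameter $m_k\in\mathbb{N}\cup\{0\}$.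 (4) While $\varphi(x_k+\tau_kd_k)>\max_{[k-m_k]^+\le i\le k}\varphi(x_i)+\sigma\tau_k\langle w_k,d_k\rangle$, set $\tau_k:=\beta\tau_k$. (5) Set $x_{k+1}:=x_k+\tau_kd_k$. Here $\tau_k$ denotes the final (accepted) stepsize. For each $k$, $\ell(k)$ denotes the smallest integer with $\ell(k)\in\operatorname{argmax}\{\varphi(x_i): [k-m_k]^+\le i\le k\}$. *)

theory Defs
  imports "HOL-Analysis.Analysis" "HOL-Library.Liminf_Limsup"
begin

text \<open>A local min-representation witnessing upper-C2: on the open set V,
  phi x = min over c in the compact (nonempty) set C of F c x; each F c is twice
  differentiable on V with gradient G c and Hessian H c, and F, its first and its
  second order partial derivatives are jointly continuous in (x,c) on V x C.\<close>
definition upper_C2_rep ::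
  "('a::euclidean_space \<Rightarrow> real) \<Rightarrow> 'a set \<Rightarrow> 'c::topological_space set \<Rightarrow>
   ('c \<Rightarrow> 'a \<Rightarrow> real) \<Rightarrow> bool" where
  "upper_C2_rep \<phi> V C F \<longleftrightarrow>
     compact C \<and> C \<noteq> {} \<and>
     (\<forall>x\<in>V. (\<exists>c\<in>C. \<phi> x = F c x) \<and> (\<forall>c\<in>C. \<phi> x \<le> F c x)) \<and>
     (\<exists>G H. (\<forall>c\<in>C. \<forall>x\<in>V.
                (F c has_derivative (\<lambda>h. G c x \<bullet> h)) (at x) \<and>
                (G c has_derivative H c x) (at x)) \<and>
            continuous_on (V \<times> C) (\<lambda>(x, c). F c x) \<and>
            (\<forall>b\<in>Basis. continuous_on (V \<times> C) (\<lambda>(x, c). G c x \<bullet> b)) \<and>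
            (\<forall>b\<in>Basis. \<forall>b'\<in>Basis.
               continuous_on (V \<times> C) (\<lambda>(x, c). H c x b \<bullet> b')))"

definition upper_C2 :: "'c::topological_space itself \<Rightarrow> ('a::euclidean_space \<Rightarrow> real) \<Rightarrow> bool" where
  "upper_C2 _ \<phi> \<longleftrightarrow>
     (\<forall>xb. \<exists>V (C::'c set) F. open V \<and> xb \<in> V \<and> upper_C2_rep \<phi> V C F)"

definition clarke_dir :: "('a::real_normed_vector \<Rightarrow> real) \<Rightarrow> 'a \<Rightarrow> 'a \<Rightarrow> ereal" where
  "clarke_dir \<phi> x v =
     Limsup (at (x, 0) within (UNIV \<times> {0<..}))
       (\<lambda>(y, t::real). ereal ((\<phi> (y + t *\<^sub>R v) - \<phi> y) / t))"

definition clarke_subdiff :: "('a::real_inner \<Rightarrow> real) \<Rightarrow> 'a \<Rightarrow> 'a set" where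
  "clarke_subdiff \<phi> x = {w. \<forall>v. ereal (w \<bullet> v) \<le> clarke_dir \<phi> x v}"

text \<open>Memory window [k - m_k]^+ .. k (nat subtraction is truncated) and l(k).\<close>
definition window :: "(nat \<Rightarrow> nat) \<Rightarrow> nat \<Rightarrow> nat set" where
  "window m k = {k - m k .. k}"

definition maxval :: "('a \<Rightarrow> real) \<Rightarrow> (nat \<Rightarrow> 'a) \<Rightarrow> (nat \<Rightarrow> nat) \<Rightarrow> nat \<Rightarrow> real" where
  "maxval \<phi> x m k = (MAX i\<in>window m k. \<phi> (x i))"

definition ell :: "('a \<Rightarrow> real) \<Rightarrow> (nat \<Rightarrow> 'a) \<Rightarrow> (nat \<Rightarrow> nat) \<Rightarrow> nat \<Rightarrow> nat" where
  "ell \<phi> x m k = (LEAST i. i \<in> window m k \<and> \<phi> (x i) = maxval \<phi> x m k)"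

text \<open>One iteration k of the Nonmonotone Subgradient Method (executed when w k \<noteq> 0):
  tau k is the accepted stepsize, obtained from taubar k after j backtracking steps.\<close>
definition nsm_step ::
  "('a::real_inner \<Rightarrow> real) \<Rightarrow> real \<Rightarrow> real \<Rightarrow> real \<Rightarrow>
   (nat \<Rightarrow> 'a) \<Rightarrow> (nat \<Rightarrow> 'a) \<Rightarrow> (nat \<Rightarrow> 'a) \<Rightarrow> (nat \<Rightarrow> real) \<Rightarrow> (nat \<Rightarrow> real) \<Rightarrow>
   (nat \<Rightarrow> nat) \<Rightarrow> nat \<Rightarrow> bool" where
  "nsm_step \<phi> \<tau>min \<sigma> \<beta> x w d taubar tau m k \<longleftrightarrow>
     d k \<noteq> 0 \<and> w k \<bullet> d k < 0 \<and> taubar k \<ge> \<tau>min \<and>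
     (let armijo = (\<lambda>t. \<phi> (x k + t *\<^sub>R d k) \<le> maxval \<phi> x m k + \<sigma> * t * (w k \<bullet> d k))
      in \<exists>j::nat. tau k = \<beta> ^ j * taubar k \<and> armijo (tau k) \<and>
                  (\<forall>i<j. \<not> armijo (\<beta> ^ i * taubar k))) \<and>
     x (Suc k) = x k + tau k *\<^sub>R d k"

definition acc_points :: "(nat \<Rightarrow> 'a::topological_space) \<Rightarrow> 'a set" where
  "acc_points x = {y. \<exists>s. strict_mono s \<and> (x \<circ> s) \<longlonglongrightarrow> y}"

end

theory Submission
  imports Defs
begin

lemma cont_bound:
  fixes f :: "'x::topological_space \<Rightarrow> 'y::real_normed_vector"
  assumes "compact K" "continuous_on K f"
  shows "\<exists>B. \<forall>x\<in>K. norm (f x) \<le> B"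
proof -
  have "bounded (f ` K)" using compact_continuous_image[OF assms(2,1)] compact_imp_bounded by blast
  then show ?thesis unfolding bounded_iff by blast
qed

lemma linear_bound_entries:
  fixes H :: "'a::euclidean_space \<Rightarrow> 'a"
  assumes lin: "linear H"
  shows "norm (H u) \<le> norm u * (\<Sum>b\<in>Basis. \<Sum>b'\<in>Basis. \<bar>H b \<bullet> b'\<bar>)"
proof -
  have Hu: "H u = (\<Sum>b\<in>Basis. (u \<bullet> b) *\<^sub>R H b)"
  proof -
    have "H u = H (\<Sum>b\<in>Basis. (u \<bullet> b) *\<^sub>R b)" by (simp add: euclidean_representation)
    also have "\<dots> = (\<Sum>b\<in>Basis. (u \<bullet> b) *\<^sub>R H b)"
      using lin by (simp add: linear_sum linear_scale)
    finally show ?thesis .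
  qed
  have "norm (H u) \<le> (\<Sum>b'\<in>Basis. \<bar>H u \<bullet> b'\<bar>)" by (rule norm_le_l1)
  also have "\<dots> \<le> (\<Sum>b'\<in>Basis. \<Sum>b\<in>Basis. norm u * \<bar>H b \<bullet> b'\<bar>)"
  proof (rule sum_mono)
    fix b' :: 'a assume "b' \<in> Basis"
    have "\<bar>H u \<bullet> b'\<bar> = \<bar>\<Sum>b\<in>Basis. (u \<bullet> b) * (H b \<bullet> b')\<bar>"
      by (simp add: Hu inner_sum_left)
    also have "\<dots> \<le> (\<Sum>b\<in>Basis. \<bar>(u \<bullet> b) * (H b \<bullet> b')\<bar>)" by (rule sum_abs)
    also have "\<dots> \<le> (\<Sum>b\<in>Basis. norm u * \<bar>H b \<bullet> b'\<bar>)"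
    proof (rule sum_mono)
      fix b :: 'a assume "b \<in> Basis"
      then have "\<bar>u \<bullet> b\<bar> \<le> norm u" by (rule Basis_le_norm)
      then show "\<bar>(u \<bullet> b) * (H b \<bullet> b')\<bar> \<le> norm u * \<bar>H b \<bullet> b'\<bar>"
        by (simp add: abs_mult mult_right_mono)
    qed
    finally show "\<bar>H u \<bullet> b'\<bar> \<le> (\<Sum>b\<in>Basis. norm u * \<bar>H b \<bullet> b'\<bar>)" .
  qed
  also have "\<dots> = norm u * (\<Sum>b\<in>Basis. \<Sum>b'\<in>Basis. \<bar>H b \<bullet> b'\<bar>)"
    by (subst sum.swap) (simp add: sum_distrib_left)
  finally show ?thesis .
qed

definition uqs :: "('a::euclidean_space \<Rightarrow> real) \<Rightarrow> 'a set \<Rightarrow> real \<Rightarrow> real \<Rightarrow> bool" where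
  "uqs \<phi> B L G \<longleftrightarrow> (\<forall>y\<in>B. \<exists>g. norm g \<le> G \<and>
      (\<forall>z\<in>B. \<phi> z \<le> \<phi> y + g \<bullet> (z - y) + L * (norm (z - y))\<^sup>2))"

lemma rep_local:
  fixes \<phi> :: "'a::euclidean_space \<Rightarrow> real" and C :: "'c::topological_space set"
  assumes rep: "upper_C2_rep \<phi> V C F" and V: "open V" "p \<in> V"
  shows "\<exists>r>0. \<exists>L G. uqs \<phi> (ball p r) L G"
proof -
  from rep have cC: "compact C" and act: "\<forall>x\<in>V. (\<exists>c\<in>C. \<phi> x = F c x) \<and> (\<forall>c\<in>C. \<phi> x \<le> F c x)"
    unfolding upper_C2_rep_def by auto
  from rep obtain G H where der: "\<forall>c\<in>C. \<forall>x\<in>V. (F c has_derivative (\<lambda>h. G c x \<bullet> h)) (at x) \<and>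
                (G c has_derivative H c x) (at x)"
    and cG: "\<forall>b\<in>Basis. continuous_on (V \<times> C) (\<lambda>(x, c). G c x \<bullet> b)"
    and cH: "\<forall>b\<in>Basis. \<forall>b'\<in>Basis. continuous_on (V \<times> C) (\<lambda>(x, c). H c x b \<bullet> b')"
    unfolding upper_C2_rep_def by blast
  obtain r where r: "r > 0" "cball p r \<subseteq> V" using V open_contains_cball by blast
  define K where "K = cball p r \<times> C"
  have cK: "compact K" unfolding K_def using cC by (simp add: compact_Times)
  have KV: "K \<subseteq> V \<times> C" unfolding K_def using r by auto
  have c1: "continuous_on K (\<lambda>(x, c). \<Sum>b\<in>Basis. \<bar>G c x \<bullet> b\<bar>)"
  proof -
    have "continuous_on K (\<lambda>xc. \<Sum>b\<in>Basis. \<bar>(\<lambda>(x, c). G c x \<bullet> b) xc\<bar>)"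
      using cG by (intro continuous_on_sum continuous_on_rabs continuous_on_subset[OF _ KV]) auto
    then show ?thesis by (simp add: case_prod_beta)
  qed
  have c2: "continuous_on K (\<lambda>(x, c). \<Sum>b\<in>Basis. \<Sum>b'\<in>Basis. \<bar>H c x b \<bullet> b'\<bar>)"
  proof -
    have "continuous_on K (\<lambda>xc. \<Sum>b\<in>Basis. \<Sum>b'\<in>Basis. \<bar>(\<lambda>(x, c). H c x b \<bullet> b') xc\<bar>)"
      using cH by (intro continuous_on_sum continuous_on_rabs continuous_on_subset[OF _ KV]) auto
    then show ?thesis by (simp add: case_prod_beta)
  qed
  obtain Mg where Mg: "\<forall>xc\<in>K. norm ((\<lambda>(x, c). \<Sum>b\<in>Basis. \<bar>G c x \<bullet> b\<bar>) xc) \<le> Mg"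
    using cont_bound[OF cK c1] by blast
  obtain Mh where Mh: "\<forall>xc\<in>K. norm ((\<lambda>(x, c). \<Sum>b\<in>Basis. \<Sum>b'\<in>Basis. \<bar>H c x b \<bullet> b'\<bar>) xc) \<le> Mh"
    using cont_bound[OF cK c2] by blast
  have Gb: "norm (G c y) \<le> Mg" if "c \<in> C" "y \<in> cball p r" for c y
  proof -
    have "norm (G c y) \<le> (\<Sum>b\<in>Basis. \<bar>G c y \<bullet> b\<bar>)" by (rule norm_le_l1)
    also have "\<dots> \<le> Mg" using Mg[rule_format, of "(y, c)"] that unfolding K_def by auto
    finally show ?thesis .
  qed
  have Hb: "onorm (H c y) \<le> Mh" if "c \<in> C" "y \<in> cball p r" for c y
  proof (rule onorm_le)
    fix u :: 'a
    have lin: "linear (H c y)"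
      using der that r(2) has_derivative_linear by blast
    have "norm (H c y u) \<le> norm u * (\<Sum>b\<in>Basis. \<Sum>b'\<in>Basis. \<bar>H c y b \<bullet> b'\<bar>)"
      by (rule linear_bound_entries[OF lin])
    also have "\<dots> \<le> norm u * Mh"
      using Mh[rule_format, of "(y, c)"] that unfolding K_def by (auto intro: mult_left_mono)
    finally show "norm (H c y u) \<le> Mh * norm u" by (simp add: mult.commute)
  qed
  have Glip: "norm (G c q - G c y) \<le> Mh * norm (q - y)"
    if "c \<in> C" "q \<in> cball p r" "y \<in> cball p r" for c q y
  proof -
    have "norm (G c q - G c y) \<le> Mh * norm (q - y)"
      apply (rule differentiable_bound[where S="cball p r" and f'="H c"])
      using convex_cball apply blast
      using der that r(2) has_derivative_at_withinI apply blast
      using Hb that apply blast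
      using that by auto
    then show ?thesis .
  qed
  have Mh0: "Mh \<ge> 0"
  proof -
    obtain c0 where "c0 \<in> C" using rep unfolding upper_C2_rep_def by blast
    have pV: "p \<in> V" using V by blast
    then have "bounded_linear (H c0 p)" using der \<open>c0 \<in> C\<close> has_derivative_bounded_linear by blast
    then have "0 \<le> onorm (H c0 p)" by (rule onorm_pos_le)
    moreover have "onorm (H c0 p) \<le> Mh" using Hb \<open>c0 \<in> C\<close> r(1) by simp
    ultimately show ?thesis by linarith
  qed
  have taylor: "F c z \<le> F c y + G c y \<bullet> (z - y) + Mh * (norm (z - y))\<^sup>2"
    if "c \<in> C" "z \<in> cball p r" "y \<in> cball p r" for c z y
  proof -
    define \<psi> where "\<psi> = (\<lambda>q. F c q - G c y \<bullet> q)"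
    have seg: "closed_segment y z \<subseteq> cball p r"
      using that closed_segment_subset convex_cball by blast
    have "norm (\<psi> z - \<psi> y) \<le> (Mh * norm (z - y)) * norm (z - y)"
    proof (rule differentiable_bound[where S="closed_segment y z" and f'="\<lambda>q h. G c q \<bullet> h - G c y \<bullet> h"])
      show "convex (closed_segment y z)" by (rule convex_closed_segment)
      show "z \<in> closed_segment y z" by (rule ends_in_segment)
      show "y \<in> closed_segment y z" by (rule ends_in_segment)
    next
      fix q assume q: "q \<in> closed_segment y z"
      then have qV: "q \<in> V" using seg r(2) by blast
      have dF: "(F c has_derivative (\<lambda>h. G c q \<bullet> h)) (at q)" using der that(1) qV by blast
      have dL: "((\<lambda>q. G c y \<bullet> q) has_derivative (\<lambda>h. G c y \<bullet> h)) (at q)"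
        by (rule bounded_linear_imp_has_derivative) (rule bounded_linear_inner_right)
      have "(\<psi> has_derivative (\<lambda>h. G c q \<bullet> h - G c y \<bullet> h)) (at q)"
        unfolding \<psi>_def by (rule has_derivative_diff[OF dF dL])
      then show "(\<psi> has_derivative (\<lambda>h. G c q \<bullet> h - G c y \<bullet> h)) (at q within closed_segment y z)"
        by (rule has_derivative_at_withinI)
    next
      fix q assume q: "q \<in> closed_segment y z"
      have "onorm (\<lambda>h. G c q \<bullet> h - G c y \<bullet> h) \<le> norm (G c q - G c y)"
      proof (rule onorm_le)
        fix h
        have "norm (G c q \<bullet> h - G c y \<bullet> h) = \<bar>(G c q - G c y) \<bullet> h\<bar>" by (simp add: inner_diff_left)
        also have "\<dots> \<le> norm (G c q - G c y) * norm h" by (rule Cauchy_Schwarz_ineq2)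
        finally show "norm (G c q \<bullet> h - G c y \<bullet> h) \<le> norm (G c q - G c y) * norm h" .
      qed
      also have "\<dots> \<le> Mh * norm (q - y)" using Glip that q seg by blast
      also have "\<dots> \<le> Mh * norm (z - y)"
      proof -
        have "norm (q - y) \<le> norm (z - y)" using q by (rule segment_bound(1))
        then show ?thesis using Mh0 by (rule mult_left_mono)
      qed
      finally show "onorm (\<lambda>h. G c q \<bullet> h - G c y \<bullet> h) \<le> Mh * norm (z - y)" .
    qed
    then have "\<psi> z - \<psi> y \<le> Mh * (norm (z - y))\<^sup>2" by (simp add: power2_eq_square mult.assoc)
    moreover have "\<psi> z - \<psi> y = F c z - F c y - G c y \<bullet> (z - y)"
      unfolding \<psi>_def by (simp add: inner_diff_right)
    ultimately show ?thesis by linarith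
  qed
  have "uqs \<phi> (ball p r) Mh Mg"
    unfolding uqs_def
  proof
    fix y assume y: "y \<in> ball p r"
    then have yV: "y \<in> V" using r by auto
    obtain c where c: "c \<in> C" "\<phi> y = F c y" using act yV by blast
    show "\<exists>g. norm g \<le> Mg \<and> (\<forall>z\<in>ball p r. \<phi> z \<le> \<phi> y + g \<bullet> (z - y) + Mh * (norm (z - y))\<^sup>2)"
    proof (intro exI conjI ballI)
      show "norm (G c y) \<le> Mg" using Gb c y by auto
      fix z assume z: "z \<in> ball p r"
      have zV: "z \<in> V" using z r by auto
      have "\<phi> z \<le> F c z" using act c zV by blast
      also have "\<dots> \<le> F c y + G c y \<bullet> (z - y) + Mh * (norm (z - y))\<^sup>2"
        using taylor c y z by auto
      finally show "\<phi> z \<le> \<phi> y + G c y \<bullet> (z - y) + Mh * (norm (z - y))\<^sup>2" using c by simp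
    qed
  qed
  then show ?thesis using r by blast
qed

lemma uqs_mono:
  assumes "uqs \<phi> B L G" "B' \<subseteq> B" "L \<le> L'" "G \<le> G'"
  shows "uqs \<phi> B' L' G'"
  unfolding uqs_def
proof
  fix y assume y: "y \<in> B'"
  then obtain g where g: "norm g \<le> G" "\<forall>z\<in>B. \<phi> z \<le> \<phi> y + g \<bullet> (z - y) + L * (norm (z - y))\<^sup>2"
    using assms(1,2) unfolding uqs_def by blast
  show "\<exists>g. norm g \<le> G' \<and> (\<forall>z\<in>B'. \<phi> z \<le> \<phi> y + g \<bullet> (z - y) + L' * (norm (z - y))\<^sup>2)"
  proof (intro exI conjI ballI)
    show "norm g \<le> G'" using g assms by linarith
    fix z assume "z \<in> B'"
    then have "\<phi> z \<le> \<phi> y + g \<bullet> (z - y) + L * (norm (z - y))\<^sup>2" using g assms by blast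
    moreover have "L * (norm (z - y))\<^sup>2 \<le> L' * (norm (z - y))\<^sup>2"
      using assms(3) by (simp add: mult_right_mono)
    ultimately show "\<phi> z \<le> \<phi> y + g \<bullet> (z - y) + L' * (norm (z - y))\<^sup>2" by linarith
  qed
qed

definition locuqs :: "('a::euclidean_space \<Rightarrow> real) \<Rightarrow> bool" where
  "locuqs \<phi> \<longleftrightarrow> (\<forall>p. \<exists>r>0. \<exists>L G. uqs \<phi> (ball p r) L G)"

lemma upper_C2_locuqs:
  fixes \<phi> :: "'a::euclidean_space \<Rightarrow> real"
  assumes "upper_C2 TYPE('c::topological_space) \<phi>"
  shows "locuqs \<phi>"
  unfolding locuqs_def
proof
  fix p
  obtain V and C :: "'c set" and F where "open V" "p \<in> V" "upper_C2_rep \<phi> V C F"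
    using assms unfolding upper_C2_def by blast
  then show "\<exists>r>0. \<exists>L G. uqs \<phi> (ball p r) L G" using rep_local by blast
qed

lemma locuqs_uniform:
  assumes loc: "locuqs \<phi>" and K: "compact K"
  shows "\<exists>e>0. \<exists>L G. \<forall>q\<in>K. uqs \<phi> (ball q e) L G"
proof -
  obtain R Lf Gf where R: "\<And>p. R p > 0 \<and> uqs \<phi> (ball p (R p)) (Lf p) (Gf p)"
    using loc unfolding locuqs_def by metis
  have "K \<subseteq> (\<Union>p\<in>K. ball p (R p))" using R by auto
  then obtain D where D: "D \<subseteq> K" "finite D" "K \<subseteq> (\<Union>p\<in>D. ball p (R p))"
    using compactE_image[OF K, of K "\<lambda>p. ball p (R p)"] by blast
  obtain e where e: "0 < e" "\<And>q. q \<in> K \<Longrightarrow> \<exists>B \<in> (\<lambda>p. ball p (R p)) ` D. ball q e \<subseteq> B"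
    using Heine_Borel_lemma[OF K, of "(\<lambda>p. ball p (R p)) ` D"] D(3) by auto
  define L where "L = Max (insert 0 (Lf ` D))"
  define G where "G = Max (insert 0 (Gf ` D))"
  have "\<forall>q\<in>K. uqs \<phi> (ball q e) L G"
  proof
    fix q assume "q \<in> K"
    then obtain p where p: "p \<in> D" "ball q e \<subseteq> ball p (R p)" using e(2) by blast
    have "Lf p \<le> L" unfolding L_def using p D by auto
    moreover have "Gf p \<le> G" unfolding G_def using p D by auto
    ultimately show "uqs \<phi> (ball q e) L G" using uqs_mono R p(2) by blast
  qed
  then show ?thesis using e(1) by blast
qed

lemma uqs_diff:
  assumes "uqs \<phi> B L G" "y \<in> B" "z \<in> B"
  shows "\<phi> z - \<phi> y \<le> G * norm (z - y) + L * (norm (z - y))\<^sup>2"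
proof -
  obtain g where g: "norm g \<le> G" "\<forall>z\<in>B. \<phi> z \<le> \<phi> y + g \<bullet> (z - y) + L * (norm (z - y))\<^sup>2"
    using assms unfolding uqs_def by blast
  have "g \<bullet> (z - y) \<le> norm g * norm (z - y)" by (rule norm_cauchy_schwarz)
  also have "\<dots> \<le> G * norm (z - y)" using g(1) by (simp add: mult_right_mono)
  finally show ?thesis using g(2) assms(3) by fastforce
qed

lemma locuqs_cont:
  assumes "locuqs \<phi>"
  shows "isCont \<phi> p"
proof -
  obtain r L G where r: "r > 0" "uqs \<phi> (ball p r) L G" using assms unfolding locuqs_def by blast
  have ev: "eventually (\<lambda>z. norm (\<phi> z - \<phi> p) \<le> \<bar>G\<bar> * norm (z - p) + \<bar>L\<bar> * (norm (z - p))\<^sup>2) (at p)"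
  proof -
    have "eventually (\<lambda>z. z \<in> ball p r) (at p)"
      using r(1) by (auto simp: eventually_at dist_commute intro!: exI[of _ r])
    then show ?thesis
    proof (rule eventually_mono)
      fix z assume z: "z \<in> ball p r"
      have pB: "p \<in> ball p r" using r by simp
      have a: "\<phi> z - \<phi> p \<le> G * norm (z - p) + L * (norm (z - p))\<^sup>2" using uqs_diff[OF r(2) pB z] .
      have b: "\<phi> p - \<phi> z \<le> G * norm (p - z) + L * (norm (p - z))\<^sup>2" using uqs_diff[OF r(2) z pB] .
      have c: "norm (p - z) = norm (z - p)" by (rule norm_minus_commute)
      have "G * norm (z - p) \<le> \<bar>G\<bar> * norm (z - p)" by (simp add: mult_right_mono)
      moreover have "L * (norm (z - p))\<^sup>2 \<le> \<bar>L\<bar> * (norm (z - p))\<^sup>2" by (simp add: mult_right_mono)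
      ultimately show "norm (\<phi> z - \<phi> p) \<le> \<bar>G\<bar> * norm (z - p) + \<bar>L\<bar> * (norm (z - p))\<^sup>2"
        using a b c by (simp add: abs_le_iff)
    qed
  qed
  have lim: "((\<lambda>z. \<bar>G\<bar> * norm (z - p) + \<bar>L\<bar> * (norm (z - p))\<^sup>2) \<longlongrightarrow> 0) (at p)"
  proof -
    have "((\<lambda>z. \<bar>G\<bar> * norm (z - p) + \<bar>L\<bar> * (norm (z - p))\<^sup>2) \<longlongrightarrow> \<bar>G\<bar> * norm (p - p) + \<bar>L\<bar> * (norm (p - p))\<^sup>2) (at p)"
      by (intro tendsto_intros)
    then show ?thesis by simp
  qed
  have "((\<lambda>z. \<phi> z - \<phi> p) \<longlongrightarrow> 0) (at p)"
    by (rule Lim_null_comparison[OF ev lim])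
  then show ?thesis unfolding isCont_def by (simp add: LIM_zero_iff)
qed

lemma cfilter_nontriv: "at (x::'a::real_normed_vector, 0::real) within UNIV \<times> {0<..} \<noteq> bot"
proof -
  have "\<forall>\<epsilon>>0. (UNIV \<times> {0<..}) \<inter> ball (x, 0::real) \<epsilon> - {(x, 0)} \<noteq> {}"
  proof (intro allI impI)
    fix \<epsilon> :: real assume e: "\<epsilon> > 0"
    have "(x, \<epsilon>/2) \<in> (UNIV \<times> {0<..}) \<inter> ball (x, 0::real) \<epsilon> - {(x, 0)}"
      using e by (auto simp: dist_Pair_Pair)
    then show "(UNIV \<times> {0<..}) \<inter> ball (x, 0::real) \<epsilon> - {(x, 0)} \<noteq> {}" by blast
  qed
  then show ?thesis using not_trivial_limit_within_ball by blast
qed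

lemma cfilter_ev:
  fixes x :: "'a::real_normed_vector"
  assumes "\<rho> > 0"
  shows "eventually (\<lambda>z. snd z > 0 \<and> norm (fst z - x) < \<rho> \<and> snd z < \<rho>) (at (x, 0::real) within UNIV \<times> {0<..})"
proof -
  have "\<forall>z\<in>UNIV \<times> {0<..}. z \<noteq> (x, 0) \<and> dist z (x, 0) < \<rho> \<longrightarrow>
          snd z > 0 \<and> norm (fst z - x) < \<rho> \<and> snd z < \<rho>"
  proof (intro ballI impI)
    fix z :: "'a \<times> real" assume z: "z \<in> UNIV \<times> {0<..}" "z \<noteq> (x, 0) \<and> dist z (x, 0) < \<rho>"
    obtain y t where zz: "z = (y, t)" by (cases z)
    have "dist y x \<le> dist z (x, 0)" "dist t 0 \<le> dist z (x, 0)"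
      using dist_fst_le[of z "(x,0)"] dist_snd_le[of z "(x,0)"] zz by auto
    then show "snd z > 0 \<and> norm (fst z - x) < \<rho> \<and> snd z < \<rho>"
      using z zz by (auto simp: dist_norm)
  qed
  note * = this
  show ?thesis unfolding eventually_at
    by (rule exI[where x=\<rho>], rule conjI[OF assms *])
qed

lemma clarke_dir_le:
  fixes \<phi> :: "'a::euclidean_space \<Rightarrow> real"
  assumes ev: "eventually (\<lambda>z. (\<phi> (fst z + snd z *\<^sub>R v) - \<phi> (fst z)) / snd z \<le> R z) (at (x,0) within UNIV \<times> {0<..})"
     and lim: "(R \<longlongrightarrow> c) (at (x,0) within UNIV \<times> {0<..})"
  shows "clarke_dir \<phi> x v \<le> ereal c"
proof -
  let ?F = "at (x, 0::real) within UNIV \<times> {0<..}"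
  have "clarke_dir \<phi> x v = Limsup ?F (\<lambda>z. ereal ((\<phi> (fst z + snd z *\<^sub>R v) - \<phi> (fst z)) / snd z))"
    unfolding clarke_dir_def case_prod_unfold by simp
  also have "\<dots> \<le> Limsup ?F (\<lambda>z. ereal (R z))"
  proof (rule Limsup_mono)
    show "\<forall>\<^sub>F z in ?F. ereal ((\<phi> (fst z + snd z *\<^sub>R v) - \<phi> (fst z)) / snd z) \<le> ereal (R z)"
      using ev by (rule eventually_mono) simp
  qed
  also have "\<dots> = ereal c"
  proof (rule lim_imp_Limsup)
    show "\<not> trivial_limit ?F" using cfilter_nontriv[of x] by simp
    show "((\<lambda>z. ereal (R z)) \<longlongrightarrow> ereal c) ?F" using lim by (rule tendsto_ereal)
  qed
  finally show ?thesis .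
qed

lemma clarke_upper:
  fixes \<phi> :: "'a::euclidean_space \<Rightarrow> real"
  assumes U: "uqs \<phi> (ball x e) L G" and e: "e > 0" and cont: "\<And>p. isCont \<phi> p"
    and w: "w \<in> clarke_subdiff \<phi> x"
  shows "norm w \<le> G" and "\<And>h. norm h < e \<Longrightarrow> \<phi> (x + h) \<le> \<phi> x + w \<bullet> h + L * (norm h)\<^sup>2"
proof -
  let ?F = "at (x, 0::real) within UNIV \<times> {0<..}"
  have key: "(\<phi> (y + t *\<^sub>R v) - \<phi> y) / t \<le> g \<bullet> v + L * t * (norm v)\<^sup>2"
    if "t > 0" "y \<in> ball x e" "y + t *\<^sub>R v \<in> ball x e" "norm g \<le> G"
       "\<forall>z\<in>ball x e. \<phi> z \<le> \<phi> y + g \<bullet> (z - y) + L * (norm (z - y))\<^sup>2" for y t v g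
  proof -
    have a: "\<phi> (y + t *\<^sub>R v) \<le> \<phi> y + g \<bullet> ((y + t *\<^sub>R v) - y) + L * (norm ((y + t *\<^sub>R v) - y))\<^sup>2"
      using that(5) that(3) by blast
    have b: "(y + t *\<^sub>R v) - y = t *\<^sub>R v" by simp
    have c: "g \<bullet> (t *\<^sub>R v) = t * (g \<bullet> v)" by simp
    have d: "norm (t *\<^sub>R v) = t * norm v" using that(1) by simp
    have "\<phi> (y + t *\<^sub>R v) - \<phi> y \<le> t * (g \<bullet> v) + L * (t * norm v)\<^sup>2"
      using a unfolding b c d by linarith
    also have "\<dots> = (g \<bullet> v + L * t * (norm v)\<^sup>2) * t" by (simp add: power2_eq_square algebra_simps)
    finally have "\<phi> (y + t *\<^sub>R v) - \<phi> y \<le> (g \<bullet> v + L * t * (norm v)\<^sup>2) * t" .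
    then show ?thesis using pos_divide_le_eq[OF that(1)] by blast
  qed
  have evb: "eventually (\<lambda>z. snd z > 0 \<and> fst z \<in> ball x e \<and> fst z + snd z *\<^sub>R v \<in> ball x e) ?F" for v :: 'a
  proof -
    define \<rho> where "\<rho> = e / (1 + norm v)"
    have \<rho>: "\<rho> > 0" unfolding \<rho>_def using e by (simp add: add_pos_nonneg)
    have n1: "1 + norm v > 0" by (simp add: add_pos_nonneg)
    have "\<rho> + \<rho> * norm v = \<rho> * (1 + norm v)" by (simp add: algebra_simps)
    also have "\<dots> = e" unfolding \<rho>_def using n1 by simp
    finally have e\<rho>: "\<rho> + \<rho> * norm v = e" .
    show ?thesis using cfilter_ev[OF \<rho>, of x]
    proof (rule eventually_mono)
      fix z :: "'a \<times> real" assume z: "snd z > 0 \<and> norm (fst z - x) < \<rho> \<and> snd z < \<rho>"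
      have eq1: "fst z + snd z *\<^sub>R v - x = (fst z - x) + snd z *\<^sub>R v" by simp
      have eq2: "norm (snd z *\<^sub>R v) = snd z * norm v" using z by simp
      have "norm (fst z + snd z *\<^sub>R v - x) \<le> norm (fst z - x) + snd z * norm v"
        unfolding eq1 using norm_triangle_ineq[of "fst z - x" "snd z *\<^sub>R v"] eq2 by linarith
      also have "\<dots> < \<rho> + \<rho> * norm v"
      proof -
        have "snd z * norm v \<le> \<rho> * norm v" using z by (intro mult_right_mono) auto
        then show ?thesis using z by linarith
      qed
      finally have "norm (fst z + snd z *\<^sub>R v - x) < e" using e\<rho> by linarith
      moreover have "\<rho> \<le> e"
      proof -
        have "\<rho> * norm v \<ge> 0" using \<rho> by simp
        then show ?thesis using e\<rho> by linarith
      qed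
      ultimately show "snd z > 0 \<and> fst z \<in> ball x e \<and> fst z + snd z *\<^sub>R v \<in> ball x e"
        using z by (auto simp: dist_norm norm_minus_commute)
    qed
  qed
  have cfst: "((\<lambda>z. \<phi> (fst z)) \<longlongrightarrow> \<phi> x) ?F"
  proof -
    have "(fst \<longlongrightarrow> fst (x, 0::real)) ?F" by (intro tendsto_fst tendsto_ident_at)
    then have "(fst \<longlongrightarrow> x) ?F" by simp
    then show ?thesis using cont isCont_tendsto_compose by blast
  qed
  have tfst: "(fst \<longlongrightarrow> x) ?F"
  proof -
    have "(fst \<longlongrightarrow> fst (x, 0::real)) ?F" by (intro tendsto_fst tendsto_ident_at)
    then show ?thesis by simp
  qed
  have tsnd: "(snd \<longlongrightarrow> 0) ?F"
  proof -
    have "(snd \<longlongrightarrow> snd (x, 0::real)) ?F" by (intro tendsto_snd tendsto_ident_at)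
    then show ?thesis by simp
  qed
  show "\<phi> (x + h) \<le> \<phi> x + w \<bullet> h + L * (norm h)\<^sup>2" if h: "norm h < e" for h
  proof -
    define R where "R = (\<lambda>z::'a\<times>real. \<phi> (fst z) - \<phi> (x + h) + G * norm (x - fst z) + L * (norm (x + h - fst z))\<^sup>2 + L * snd z * (norm (-h))\<^sup>2)"
    have xh: "x + h \<in> ball x e" using h by (simp add: dist_norm)
    have ev: "eventually (\<lambda>z. (\<phi> (fst z + snd z *\<^sub>R (-h)) - \<phi> (fst z)) / snd z \<le> R z) ?F"
      using evb[of "-h"]
    proof (rule eventually_mono)
      fix z :: "'a \<times> real"
      assume z: "snd z > 0 \<and> fst z \<in> ball x e \<and> fst z + snd z *\<^sub>R (-h) \<in> ball x e"
      obtain g where g: "norm g \<le> G" "\<forall>q\<in>ball x e. \<phi> q \<le> \<phi> (fst z) + g \<bullet> (q - fst z) + L * (norm (q - fst z))\<^sup>2"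
        using U z unfolding uqs_def by blast
      have k: "(\<phi> (fst z + snd z *\<^sub>R (-h)) - \<phi> (fst z)) / snd z \<le> g \<bullet> (-h) + L * snd z * (norm (-h))\<^sup>2"
        using key[of "snd z" "fst z" "-h" g] z g by blast
      have "\<phi> (x + h) \<le> \<phi> (fst z) + g \<bullet> (x + h - fst z) + L * (norm (x + h - fst z))\<^sup>2"
        using g(2) xh by blast
      moreover have "g \<bullet> (x + h - fst z) = g \<bullet> h + g \<bullet> (x - fst z)" by (simp add: inner_diff_right inner_add_right)
      moreover have "g \<bullet> (x - fst z) \<le> G * norm (x - fst z)"
        using norm_cauchy_schwarz[of g "x - fst z"] g(1) by (meson mult_right_mono norm_ge_zero order_trans)
      ultimately have "g \<bullet> (-h) \<le> \<phi> (fst z) - \<phi> (x + h) + G * norm (x - fst z) + L * (norm (x + h - fst z))\<^sup>2"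
        by simp
      then show "(\<phi> (fst z + snd z *\<^sub>R (-h)) - \<phi> (fst z)) / snd z \<le> R z"
        using k unfolding R_def by linarith
    qed
    have lim: "(R \<longlongrightarrow> \<phi> x - \<phi> (x + h) + G * norm (x - x) + L * (norm (x + h - x))\<^sup>2 + L * 0 * (norm (-h))\<^sup>2) ?F"
      unfolding R_def by (intro tendsto_intros cfst tfst tsnd)
    have A: "clarke_dir \<phi> x (-h) \<le> ereal (\<phi> x - \<phi> (x + h) + G * norm (x - x) + L * (norm (x + h - x))\<^sup>2 + L * 0 * (norm (-h))\<^sup>2)"
      by (rule clarke_dir_le[OF ev lim])
    have B: "ereal (w \<bullet> (-h)) \<le> clarke_dir \<phi> x (-h)" using w unfolding clarke_subdiff_def by blast
    have "w \<bullet> (-h) \<le> \<phi> x - \<phi> (x + h) + G * norm (x - x) + L * (norm (x + h - x))\<^sup>2 + L * 0 * (norm (-h))\<^sup>2"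
      using order_trans[OF B A] by (simp only: ereal_less_eq)
    then have "w \<bullet> (-h) \<le> \<phi> x - \<phi> (x + h) + L * (norm h)\<^sup>2" by simp
    then show ?thesis by simp
  qed
  have "w \<bullet> v \<le> G * norm v" for v
  proof -
    define R where "R = (\<lambda>z::'a\<times>real. G * norm v + L * snd z * (norm v)\<^sup>2)"
    have ev: "eventually (\<lambda>z. (\<phi> (fst z + snd z *\<^sub>R v) - \<phi> (fst z)) / snd z \<le> R z) ?F"
      using evb[of v]
    proof (rule eventually_mono)
      fix z :: "'a \<times> real"
      assume z: "snd z > 0 \<and> fst z \<in> ball x e \<and> fst z + snd z *\<^sub>R v \<in> ball x e"
      obtain g where g: "norm g \<le> G" "\<forall>q\<in>ball x e. \<phi> q \<le> \<phi> (fst z) + g \<bullet> (q - fst z) + L * (norm (q - fst z))\<^sup>2"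
        using U z unfolding uqs_def by blast
      have k: "(\<phi> (fst z + snd z *\<^sub>R v) - \<phi> (fst z)) / snd z \<le> g \<bullet> v + L * snd z * (norm v)\<^sup>2"
        using key[of "snd z" "fst z" v g] z g by blast
      have "g \<bullet> v \<le> G * norm v"
        using norm_cauchy_schwarz[of g v] g(1) by (meson mult_right_mono norm_ge_zero order_trans)
      then show "(\<phi> (fst z + snd z *\<^sub>R v) - \<phi> (fst z)) / snd z \<le> R z"
        using k unfolding R_def by linarith
    qed
    have lim: "(R \<longlongrightarrow> G * norm v + L * 0 * (norm v)\<^sup>2) ?F"
      unfolding R_def by (intro tendsto_intros tsnd)
    have A: "clarke_dir \<phi> x v \<le> ereal (G * norm v + L * 0 * (norm v)\<^sup>2)"
      by (rule clarke_dir_le[OF ev lim])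
    have B: "ereal (w \<bullet> v) \<le> clarke_dir \<phi> x v" using w unfolding clarke_subdiff_def by blast
    have "w \<bullet> v \<le> G * norm v + L * 0 * (norm v)\<^sup>2"
      using order_trans[OF B A] by (simp only: ereal_less_eq)
    then show ?thesis by simp
  qed
  note wv = this
  obtain b :: 'a where b: "b \<in> Basis" using nonempty_Basis by blast
  have G0: "G \<ge> 0" using wv[of b] wv[of "-b"] b by simp
  show "norm w \<le> G"
  proof (cases "w = 0")
    case True then show ?thesis using G0 by simp
  next
    case False
    then have "norm w * norm w \<le> G * norm w" using wv[of w] by (simp add: power2_norm_eq_inner[symmetric] power2_eq_square)
    then show ?thesis using False by simp
  qed
qed

lemma Limsup_filter_mono:
  assumes "F1 \<le> F2"
  shows "Limsup F1 f \<le> Limsup F2 f"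
  unfolding Limsup_def
proof (rule INF_superset_mono)
  show "{P. eventually P F2} \<subseteq> {P. eventually P F1}" using assms by (auto simp: le_filter_def)
qed simp

lemma stationary_of_upper_quad:
  fixes \<phi> :: "'a::euclidean_space \<Rightarrow> real"
  assumes \<rho>: "\<rho> > 0" and q: "\<And>h. norm h < \<rho> \<Longrightarrow> \<phi> (y + h) \<le> \<phi> y + L * (norm h)\<^sup>2"
  shows "0 \<in> clarke_subdiff \<phi> y"
  unfolding clarke_subdiff_def
proof (intro CollectI allI)
  fix v :: 'a
  let ?F = "at (y, 0::real) within UNIV \<times> {0<..}"
  let ?f = "\<lambda>(z, t::real). ereal ((\<phi> (z + t *\<^sub>R v) - \<phi> z) / t)"
  define g where "g = (\<lambda>t::real. (y - t *\<^sub>R v, t))"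
  have gt: "(g \<longlongrightarrow> (y, 0)) (at_right 0)"
  proof -
    have "((\<lambda>t::real. (y - t *\<^sub>R v, t)) \<longlongrightarrow> (y - 0 *\<^sub>R v, 0)) (at_right 0)"
      by (intro tendsto_intros)
    then show ?thesis unfolding g_def by simp
  qed
  have gev: "eventually (\<lambda>t. g t \<in> UNIV \<times> {0<..} \<and> g t \<noteq> (y, 0)) (at_right (0::real))"
    using eventually_at_right_less[of "0::real"] by (rule eventually_mono) (auto simp: g_def)
  have fl: "filterlim g ?F (at_right 0)"
    unfolding filterlim_at using gt gev by blast
  have "Limsup (at_right 0) (\<lambda>t. ?f (g t)) \<le> Limsup (filtermap g (at_right 0)) ?f"
    by (rule Limsup_filtermap_ge)
  also have "\<dots> \<le> Limsup ?F ?f"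
    by (rule Limsup_filter_mono) (use fl in \<open>simp add: filterlim_def\<close>)
  finally have A: "Limsup (at_right 0) (\<lambda>t. ?f (g t)) \<le> clarke_dir \<phi> y v"
    unfolding clarke_dir_def .
  have ev: "eventually (\<lambda>t. ereal (- (L * t * (norm v)\<^sup>2)) \<le> ?f (g t)) (at_right (0::real))"
  proof -
    define r where "r = \<rho> / (1 + norm v)"
    have n1: "1 + norm v > 0" by (simp add: add_pos_nonneg)
    have r: "r > 0" unfolding r_def using \<rho> n1 by simp
    have "eventually (\<lambda>t::real. 0 < t \<and> t < r) (at_right 0)"
      using r by (simp add: eventually_conj eventually_at_right_less eventually_at_right_field) 
        (auto simp: eventually_at_right_field)
    then show ?thesis
    proof (rule eventually_mono)
      fix t :: real assume t: "0 < t \<and> t < r"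
      have "norm (- (t *\<^sub>R v)) = t * norm v" using t by simp
      also have "\<dots> \<le> r * norm v" using t by (simp add: mult_right_mono)
      also have "\<dots> < \<rho>"
      proof -
        have "r * norm v < r * (1 + norm v)" using r by simp
        also have "\<dots> = \<rho>" unfolding r_def using n1 by simp
        finally show ?thesis .
      qed
      finally have hn: "norm (- (t *\<^sub>R v)) < \<rho>" .
      have "\<phi> (y + - (t *\<^sub>R v)) \<le> \<phi> y + L * (norm (- (t *\<^sub>R v)))\<^sup>2" using q[OF hn] .
      then have "\<phi> (y - t *\<^sub>R v) \<le> \<phi> y + L * (t * norm v)\<^sup>2" using t by simp
      then have "- (L * t * (norm v)\<^sup>2) * t \<le> \<phi> y - \<phi> (y - t *\<^sub>R v)"
        by (simp add: power2_eq_square algebra_simps)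
      then have "- (L * t * (norm v)\<^sup>2) \<le> (\<phi> y - \<phi> (y - t *\<^sub>R v)) / t"
        using t by (simp add: pos_le_divide_eq)
      then show "ereal (- (L * t * (norm v)\<^sup>2)) \<le> ?f (g t)"
        unfolding g_def by simp
    qed
  qed
  have nb: "at_right (0::real) \<noteq> bot" by simp
  have "ereal 0 = Liminf (at_right 0) (\<lambda>t. ereal (- (L * t * (norm v)\<^sup>2)))"
  proof (rule lim_imp_Liminf[symmetric])
    show "\<not> trivial_limit (at_right (0::real))" by simp
    have "((\<lambda>t. - (L * t * (norm v)\<^sup>2)) \<longlongrightarrow> - (L * 0 * (norm v)\<^sup>2)) (at_right (0::real))"
      by (intro tendsto_intros)
    then show "((\<lambda>t. ereal (- (L * t * (norm v)\<^sup>2))) \<longlongrightarrow> ereal 0) (at_right (0::real))"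
      by (simp add: tendsto_ereal)
  qed
  also have "\<dots> \<le> Liminf (at_right 0) (\<lambda>t. ?f (g t))"
    by (rule Liminf_mono[OF ev])
  also have "\<dots> \<le> Limsup (at_right 0) (\<lambda>t. ?f (g t))"
    by (rule Liminf_le_Limsup[OF nb])
  also note A
  finally show "ereal (0 \<bullet> v) \<le> clarke_dir \<phi> y v" by simp
qed

definition clust :: "(nat \<Rightarrow> 'a::metric_space) \<Rightarrow> 'a set" where
  "clust x = {y. \<forall>e>0. \<forall>N. \<exists>n\<ge>N. dist (x n) y < e}"

lemma freq_imp_subseq:
  fixes x :: "nat \<Rightarrow> 'a::metric_space"
  assumes "y \<in> clust x"
  shows "\<exists>r. strict_mono r \<and> (x \<circ> r) \<longlonglongrightarrow> y"
proof -
  have "\<forall>k N. \<exists>n\<ge>N. dist (x n) y < 1 / (real k + 1)"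
    using assms unfolding clust_def by (auto intro!: divide_pos_pos)
  then obtain f where f: "\<And>k N. f k N \<ge> N \<and> dist (x (f k N)) y < 1 / (real k + 1)"
    by metis
  define r where "r = rec_nat (f 0 0) (\<lambda>k rk. f (Suc k) (Suc rk))"
  have r0: "r 0 = f 0 0" and rS: "\<And>k. r (Suc k) = f (Suc k) (Suc (r k))" by (simp_all add: r_def)
  have sm: "strict_mono r"
    unfolding strict_mono_Suc_iff using f rS by (metis Suc_le_lessD)
  have rd: "dist (x (r k)) y < 1 / (real k + 1)" for k
  proof (cases k)
    case 0 then show ?thesis using f[of 0 0] r0 by simp
  next
    case (Suc k') then show ?thesis using f[where k="Suc k'" and N="Suc (r k')"] rS[of k'] by simp
  qed
  have "(x \<circ> r) \<longlonglongrightarrow> y"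
    unfolding lim_sequentially
  proof (intro allI impI)
    fix e :: real assume e: "e > 0"
    obtain n0 :: nat where n0: "1 / (real n0 + 1) < e"
      using e by (metis nat_approx_posE of_nat_Suc add.commute)
    show "\<exists>no. \<forall>n\<ge>no. dist ((x \<circ> r) n) y < e"
    proof (intro exI allI impI)
      fix n assume "n \<ge> n0"
      then have "1 / (real n + 1) \<le> 1 / (real n0 + 1)" by (simp add: frac_le)
      then show "dist ((x \<circ> r) n) y < e" using rd[of n] n0 by simp
    qed
  qed
  then show ?thesis using sm by blast
qed

lemma acc_points_clust:
  fixes x :: "nat \<Rightarrow> 'a::metric_space"
  shows "acc_points x = clust x"
proof
  show "acc_points x \<subseteq> clust x"
  proof
    fix y assume "y \<in> acc_points x"
    then obtain s where s: "strict_mono s" "(x \<circ> s) \<longlonglongrightarrow> y" unfolding acc_points_def by blast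
    show "y \<in> clust x" unfolding clust_def
    proof (intro CollectI allI impI)
      fix e :: real and N assume e: "e > 0"
      obtain n0 where n0: "\<forall>n\<ge>n0. dist ((x \<circ> s) n) y < e" using s(2) e unfolding lim_sequentially by blast
      have "s (max n0 N) \<ge> N" using seq_suble[OF s(1), of "max n0 N"] by simp
      moreover have "dist (x (s (max n0 N))) y < e" using n0 by simp
      ultimately show "\<exists>n\<ge>N. dist (x n) y < e" by blast
    qed
  qed
  show "clust x \<subseteq> acc_points x" unfolding acc_points_def using freq_imp_subseq by blast
qed

lemma clust_closed:
  fixes x :: "nat \<Rightarrow> 'a::metric_space"
  shows "closed (clust x)"
  unfolding closed_sequential_limits
proof (intro allI impI)
  fix z :: "nat \<Rightarrow> 'a" and l assume h: "(\<forall>n. z n \<in> clust x) \<and> z \<longlonglongrightarrow> l"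
  show "l \<in> clust x" unfolding clust_def
  proof (intro CollectI allI impI)
    fix e :: real and N assume e: "e > 0"
    obtain n0 where "\<forall>n\<ge>n0. dist (z n) l < e / 2" using h e unfolding lim_sequentially
      by (meson half_gt_zero)
    then have z1: "dist (z n0) l < e / 2" by simp
    have "z n0 \<in> clust x" using h by blast
    then have "\<forall>e>0. \<forall>N. \<exists>n\<ge>N. dist (x n) (z n0) < e" unfolding clust_def by blast
    moreover have "e / 2 > 0" using e by simp
    ultimately obtain n where n: "n \<ge> N" "dist (x n) (z n0) < e / 2" by blast
    have "dist (x n) l \<le> dist (x n) (z n0) + dist (z n0) l" by (rule dist_triangle)
    then show "\<exists>n\<ge>N. dist (x n) l < e" using n z1 by (intro exI[of _ n]) auto
  qed
qed

lemma clust_sub_closure: "clust x \<subseteq> closure (range x)"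
proof
  fix y assume y: "y \<in> clust x"
  show "y \<in> closure (range x)" unfolding closure_approachable
  proof (intro allI impI)
    fix e :: real assume "e > 0"
    then obtain n where "dist (x n) y < e" using y unfolding clust_def by blast
    then show "\<exists>z\<in>range x. dist z y < e" by blast
  qed
qed

lemma infdist_lower:
  assumes "A \<noteq> {}" "\<And>a. a \<in> A \<Longrightarrow> \<delta> \<le> dist z a"
  shows "\<delta> \<le> infdist z A"
  unfolding infdist_notempty[OF assms(1)] by (rule cINF_greatest) (use assms in auto)

lemma subseq_conv:
  fixes x :: "nat \<Rightarrow> 'a::euclidean_space" and r :: "nat \<Rightarrow> nat"
  assumes "bounded (range x)" "strict_mono r"
  shows "\<exists>r2 y. strict_mono r2 \<and> (x \<circ> (r \<circ> r2)) \<longlonglongrightarrow> y \<and> y \<in> clust x"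
proof -
  have sc: "seq_compact (closure (range x))"
    using assms(1) by (intro compact_imp_seq_compact) simp
  have "\<forall>n. (x \<circ> r) n \<in> closure (range x)" using closure_subset[of "range x"] by auto
  from seq_compactE[OF sc this]
  obtain y r2 where r2: "strict_mono r2" "((x \<circ> r) \<circ> r2) \<longlonglongrightarrow> y"
    by blast
  have sm: "strict_mono (r \<circ> r2)" using assms(2) r2(1) by (simp add: strict_mono_o)
  have "y \<in> acc_points x" unfolding acc_points_def using sm r2(2) by (auto simp: o_assoc)
  then show ?thesis using r2 acc_points_clust by (metis o_assoc)
qed

lemma clust_connected:
  fixes x :: "nat \<Rightarrow> 'a::euclidean_space"
  assumes bx: "bounded (range x)" and st: "(\<lambda>n. norm (x (Suc n) - x n)) \<longlonglongrightarrow> 0"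
  shows "connected (clust x)"
proof -
  have cl: "closed (clust x)" by (rule clust_closed)
  show ?thesis unfolding connected_closed_set[OF cl]
  proof (rule notI, elim exE conjE)
    fix A B assume A: "closed A" and B: "closed B" and An: "A \<noteq> {}" and Bn: "B \<noteq> {}"
      and AB: "A \<union> B = clust x" and ABd: "A \<inter> B = {}"
    have cc: "compact (closure (range x))" using bx by simp
    have "compact (closure (range x) \<inter> A)" using cc A by blast
    moreover have "closure (range x) \<inter> A = A" using AB clust_sub_closure[of x] by blast
    ultimately have cA: "compact A" by simp
    obtain \<delta> where \<delta>: "\<delta> > 0" "\<forall>a\<in>A. \<forall>b\<in>B. \<delta> \<le> dist a b"
      using separate_compact_closed[OF cA B ABd] by blast
    obtain a where a: "a \<in> A" using An by blast
    obtain b where b: "b \<in> B" using Bn by blast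
    have aC: "a \<in> clust x" and bC: "b \<in> clust x" using a b AB by auto
    have infB: "\<delta> \<le> infdist z A" if "z \<in> B" for z
      by (rule infdist_lower[OF An]) (use \<delta> that in \<open>auto simp: dist_commute\<close>)
    have d3: "\<delta> / 3 > 0" using \<delta> by simp
    have "\<forall>r>0. \<exists>no. \<forall>n\<ge>no. norm (x (Suc n) - x n) < r" using st unfolding lim_sequentially by simp
    then obtain N0 where N0: "\<forall>n\<ge>N0. norm (x (Suc n) - x n) < \<delta> / 3"
      using d3 by blast
    let ?P = "\<lambda>n. \<delta> / 3 \<le> infdist (x n) A \<and> infdist (x n) A \<le> 2 * \<delta> / 3"
    have freq: "\<exists>n\<ge>N. ?P n" for N
    proof -
      obtain n1 where n1: "n1 \<ge> max N N0" "dist (x n1) a < \<delta> / 3"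
        using aC d3 unfolding clust_def by blast
      obtain n2 where n2: "n2 \<ge> n1" "dist (x n2) b < \<delta> / 3"
        using bC d3 unfolding clust_def by blast
      have i1: "infdist (x n1) A < \<delta> / 3" using infdist_le[OF a, of "x n1"] n1 by linarith
      have "infdist b A \<le> infdist (x n2) A + dist b (x n2)" by (rule infdist_triangle)
      moreover have "dist b (x n2) < \<delta> / 3" using n2 by (simp add: dist_commute)
      ultimately have i2: "\<delta> / 3 \<le> infdist (x n2) A" using infB[OF b] \<delta>(1) by linarith
      define n where "n = (LEAST n. n1 \<le> n \<and> \<delta> / 3 \<le> infdist (x n) A)"
      have nP: "n1 \<le> n \<and> \<delta> / 3 \<le> infdist (x n) A"
        unfolding n_def by (rule LeastI[of _ n2]) (use n2 i2 in auto)
      have "n \<noteq> n1" using nP i1 by auto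
      then have nn1: "n > n1" using nP by simp
      then obtain m where m: "n = Suc m" "m \<ge> n1" by (metis less_imp_Suc_add le_add1)
      have "\<not> (n1 \<le> m \<and> \<delta> / 3 \<le> infdist (x m) A)"
      proof
        assume "n1 \<le> m \<and> \<delta> / 3 \<le> infdist (x m) A"
        then have "n \<le> m" unfolding n_def by (rule Least_le)
        then show False using m by simp
      qed
      then have im: "infdist (x m) A < \<delta> / 3" using m by simp
      have "infdist (x n) A \<le> infdist (x m) A + dist (x n) (x m)" by (rule infdist_triangle)
      moreover have "dist (x n) (x m) < \<delta> / 3" using N0 m n1 by (simp add: dist_norm)
      ultimately have "infdist (x n) A \<le> 2 * \<delta> / 3" using im by simp
      then show ?thesis using nP nn1 n1 by (intro exI[of _ n]) auto
    qed
    have "\<not> eventually (\<lambda>n. \<not> ?P n) sequentially"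
      unfolding eventually_sequentially using freq by blast
    from not_eventually_sequentiallyD[OF this]
    obtain r :: "nat \<Rightarrow> nat" where r: "strict_mono r" "\<And>n. ?P (r n)"
      by auto
    obtain r2 y where r2: "strict_mono r2" "(x \<circ> (r \<circ> r2)) \<longlonglongrightarrow> y" "y \<in> clust x"
      using subseq_conv[OF bx r(1)] by blast
    have lim: "(\<lambda>n. infdist ((x \<circ> (r \<circ> r2)) n) A) \<longlonglongrightarrow> infdist y A"
      by (intro tendsto_intros r2(2))
    have "\<delta> / 3 \<le> infdist y A"
      by (rule LIMSEQ_le_const[OF lim]) (use r(2) in auto)
    then have "y \<notin> A" using \<delta> by auto
    then have yB: "y \<in> B" using r2(3) AB by blast
    have far: "\<delta> / 3 \<le> dist ((x \<circ> (r \<circ> r2)) n) y" for n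
    proof -
      have "\<delta> \<le> infdist y A" using infB[OF yB] .
      also have "\<dots> \<le> infdist ((x \<circ> (r \<circ> r2)) n) A + dist y ((x \<circ> (r \<circ> r2)) n)" by (rule infdist_triangle)
      finally show ?thesis using r(2)[of "r2 n"] by (simp add: dist_commute)
    qed
    obtain n0 where "\<forall>n\<ge>n0. dist ((x \<circ> (r \<circ> r2)) n) y < \<delta> / 3"
      using r2(2) d3 unfolding lim_sequentially by blast
    then show False using far[of n0] by force
  qed
qed

lemma single_clust_converges:
  fixes x :: "nat \<Rightarrow> 'a::euclidean_space"
  assumes bx: "bounded (range x)" and cy: "clust x = {y}"
  shows "x \<longlonglongrightarrow> y"
proof (rule ccontr)
  assume "\<not> x \<longlonglongrightarrow> y"
  then obtain e where e: "e > 0" "\<not> eventually (\<lambda>n. dist (x n) y < e) sequentially"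
    unfolding tendsto_iff by blast
  from not_eventually_sequentiallyD[OF e(2)]
  obtain r :: "nat \<Rightarrow> nat" where r: "strict_mono r" "\<forall>n. \<not> dist (x (r n)) y < e"
    by auto
  obtain r2 z where r2: "strict_mono r2" "(x \<circ> (r \<circ> r2)) \<longlonglongrightarrow> z" "z \<in> clust x"
    using subseq_conv[OF bx r(1)] by blast
  then have "z = y" using cy by blast
  then obtain n0 where "\<forall>n\<ge>n0. dist ((x \<circ> (r \<circ> r2)) n) y < e"
    using r2(2) e unfolding lim_sequentially by blast
  then show False using r(2) by auto
qed

lemma isolated_clust_single:
  fixes x :: "nat \<Rightarrow> 'a::euclidean_space"
  assumes con: "connected (clust x)" and y: "y \<in> clust x" and e: "e > 0"
    and iso: "\<forall>z\<in>clust x. z \<noteq> y \<longrightarrow> dist z y \<ge> e"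
  shows "clust x = {y}"
proof (rule ccontr)
  assume ne: "clust x \<noteq> {y}"
  have cl: "closed (clust x)" by (rule clust_closed)
  define B where "B = clust x \<inter> {z. e \<le> dist z y}"
  have cB: "closed B" unfolding B_def
    by (intro closed_Int cl closed_Collect_le continuous_intros)
  have Bn: "B \<noteq> {}" using ne y iso unfolding B_def by blast
  have "{y} \<union> B = clust x" using y iso unfolding B_def by auto
  moreover have "{y} \<inter> B = {}" using e unfolding B_def by auto
  ultimately show False using con unfolding connected_closed_set[OF cl] using cB Bn by blast
qed

locale nsm =
  fixes \<phi> :: "'a::euclidean_space \<Rightarrow> real" and x w d :: "nat \<Rightarrow> 'a" and taubar tau :: "nat \<Rightarrow> real"
    and m :: "nat \<Rightarrow> nat" and \<tau>min \<sigma> \<beta> a T :: real and M :: nat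
  assumes loc: "locuqs \<phi>"
    and bddb: "bdd_below (range \<phi>)"
    and par: "\<tau>min > 0" "0 < \<sigma>" "\<sigma> < 1" "0 < \<beta>" "\<beta> < 1"
    and subgrad: "\<And>k. w k \<in> clarke_subdiff \<phi> (x k)"
    and step: "\<And>k. nsm_step \<phi> \<tau>min \<sigma> \<beta> x w d taubar tau m k"
    and apos: "a > 0" and ha: "\<And>k. w k \<bullet> d k \<le> - a * (norm (d k))\<^sup>2"
    and hb: "\<And>s :: nat \<Rightarrow> nat. strict_mono s \<Longrightarrow> bounded (range (x \<circ> s)) \<Longrightarrow> \<exists>b>0. \<forall>j. norm (w (s j)) \<le> b * norm (d (s j))"
    and hc: "\<And>k. m (Suc k) \<le> min (m k + 1) M"
    and tauT: "\<And>k. tau k \<le> T"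
begin

abbreviation V where "V \<equiv> maxval \<phi> x m"
definition dl where "dl k = \<sigma> * a * tau k * (norm (d k))\<^sup>2"

lemma cont: "isCont \<phi> p" using loc by (rule locuqs_cont)

lemma step_basic:
  shows "d k \<noteq> 0" "x (Suc k) = x k + tau k *\<^sub>R d k" "tau k > 0"
    "\<phi> (x (Suc k)) \<le> V k + \<sigma> * tau k * (w k \<bullet> d k)"
    "tau k \<ge> \<tau>min \<or> \<not> (\<phi> (x k + (tau k / \<beta>) *\<^sub>R d k) \<le> V k + \<sigma> * (tau k / \<beta>) * (w k \<bullet> d k))"
proof -
  have s: "d k \<noteq> 0 \<and> w k \<bullet> d k < 0 \<and> taubar k \<ge> \<tau>min \<and>
     (\<exists>j::nat. tau k = \<beta> ^ j * taubar k \<and> (\<phi> (x k + tau k *\<^sub>R d k) \<le> V k + \<sigma> * tau k * (w k \<bullet> d k)) \<and>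
                  (\<forall>i<j. \<not> (\<phi> (x k + (\<beta> ^ i * taubar k) *\<^sub>R d k) \<le> V k + \<sigma> * (\<beta> ^ i * taubar k) * (w k \<bullet> d k)))) \<and>
     x (Suc k) = x k + tau k *\<^sub>R d k"
    using step[of k] unfolding nsm_step_def Let_def by simp
  then obtain j where j: "tau k = \<beta> ^ j * taubar k" "\<phi> (x k + tau k *\<^sub>R d k) \<le> V k + \<sigma> * tau k * (w k \<bullet> d k)"
    "\<forall>i<j. \<not> (\<phi> (x k + (\<beta> ^ i * taubar k) *\<^sub>R d k) \<le> V k + \<sigma> * (\<beta> ^ i * taubar k) * (w k \<bullet> d k))"
    by blast
  show "d k \<noteq> 0" "x (Suc k) = x k + tau k *\<^sub>R d k" using s by auto
  show "tau k > 0" using j(1) s par by simp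
  show "\<phi> (x (Suc k)) \<le> V k + \<sigma> * tau k * (w k \<bullet> d k)" using j(2) s by simp
  show "tau k \<ge> \<tau>min \<or> \<not> (\<phi> (x k + (tau k / \<beta>) *\<^sub>R d k) \<le> V k + \<sigma> * (tau k / \<beta>) * (w k \<bullet> d k))"
  proof (cases j)
    case 0 then show ?thesis using j(1) s by simp
  next
    case (Suc i)
    then have "tau k / \<beta> = \<beta> ^ i * taubar k" using j(1) par by simp
    then show ?thesis using j(3) Suc by auto
  qed
qed

lemma dl_nonneg: "dl k \<ge> 0"
  unfolding dl_def using par apos step_basic(3)[of k] by simp

lemma decrease: "\<phi> (x (Suc k)) \<le> V k - dl k"
proof -
  have "\<sigma> * tau k * (w k \<bullet> d k) \<le> \<sigma> * tau k * (- a * (norm (d k))\<^sup>2)"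
    using ha[of k] par step_basic(3)[of k] by (intro mult_left_mono) auto
  also have "\<dots> = - dl k" unfolding dl_def by simp
  finally show ?thesis using step_basic(4)[of k] by simp
qed

lemma window_props:
  shows "finite (window m k)" "k \<in> window m k" "window m k \<subseteq> {k - M..k}"
proof -
  show "finite (window m k)" unfolding window_def by simp
  show "k \<in> window m k" unfolding window_def by simp
  show "window m k \<subseteq> {k - M..k}"
  proof (cases k)
    case 0 then show ?thesis unfolding window_def by simp
  next
    case (Suc k')
    have "m k \<le> M" using hc[of k'] Suc by simp
    then show ?thesis unfolding window_def by auto
  qed
qed

lemma V_ge: "i \<in> window m k \<Longrightarrow> \<phi> (x i) \<le> V k"
  unfolding maxval_def using window_props(1) by (intro Max_ge) auto

lemma V_attained: "\<exists>i\<in>window m k. \<phi> (x i) = V k"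
proof -
  have "V k \<in> (\<lambda>i. \<phi> (x i)) ` window m k"
    unfolding maxval_def using window_props(1,2)[of k] by (intro Max_in) auto
  then show ?thesis by force
qed

lemma ell_props: "ell \<phi> x m k \<in> window m k" "\<phi> (x (ell \<phi> x m k)) = V k"
proof -
  have "\<exists>i. i \<in> window m k \<and> \<phi> (x i) = V k" using V_attained by blast
  then have "ell \<phi> x m k \<in> window m k \<and> \<phi> (x (ell \<phi> x m k)) = V k"
    unfolding ell_def by (rule LeastI_ex)
  then show "ell \<phi> x m k \<in> window m k" "\<phi> (x (ell \<phi> x m k)) = V k" by auto
qed

lemma phi_le_V: "\<phi> (x k) \<le> V k" using V_ge window_props(2) by blast

lemma V_Suc: "V (Suc k) \<le> V k"
proof -
  obtain i where i: "i \<in> window m (Suc k)" "\<phi> (x i) = V (Suc k)" using V_attained by blast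
  show ?thesis
  proof (cases "i = Suc k")
    case True
    then show ?thesis using i decrease[of k] dl_nonneg[of k] by simp
  next
    case False
    have "m (Suc k) \<le> m k + 1" using hc[of k] by simp
    then have iw: "i \<in> window m k" using i(1) False unfolding window_def by auto
    have "\<phi> (x i) \<le> V k" by (rule V_ge[OF iw])
    then show ?thesis using i(2) by linarith
  qed
qed

lemma V_mono: "k \<le> j \<Longrightarrow> V j \<le> V k"
proof (induction j rule: dec_induct)
  case base then show ?case by simp
next
  case (step j) then show ?case using V_Suc[of j] by simp
qed

lemma V_bdd: "bdd_below (range V)"
proof -
  obtain c where c: "\<forall>z. c \<le> \<phi> z" using bddb unfolding bdd_below_def by auto
  have "c \<le> V k" for k using c phi_le_V[of k] by (meson order_trans)
  then show ?thesis unfolding bdd_below_def by blast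
qed

definition Lv where "Lv = (INF k. V k)"

lemma V_lim: "V \<longlonglongrightarrow> Lv"
  unfolding Lv_def by (rule LIMSEQ_decseq_INF[OF V_bdd]) (simp add: decseq_Suc_iff V_Suc)

lemma V_ge_Lv: "Lv \<le> V k"
  unfolding Lv_def by (rule cINF_lower[OF V_bdd]) simp

lemma block: "\<exists>j\<in>{k..k+M}. V (k + M + 1) \<le> V k - dl j"
proof -
  obtain i where i: "i \<in> window m (k + M + 1)" "\<phi> (x i) = V (k + M + 1)" using V_attained by blast
  have "i \<in> {k + M + 1 - M .. k + M + 1}" using i(1) window_props(3) by blast
  then obtain j where j: "i = Suc j" "j \<in> {k..k+M}" by (cases i) auto
  have "\<phi> (x i) \<le> V j - dl j" using decrease[of j] j by simp
  also have "\<dots> \<le> V k - dl j" using V_mono[of k j] j by simp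
  finally show ?thesis using i j by auto
qed

lemma d_le_w: "a * norm (d k) \<le> norm (w k)"
proof -
  have "a * (norm (d k))\<^sup>2 \<le> - (w k \<bullet> d k)" using ha[of k] by simp
  also have "\<dots> \<le> norm (w k) * norm (d k)"
    using norm_cauchy_schwarz[of "- w k" "d k"] by simp
  finally have "(a * norm (d k)) * norm (d k) \<le> norm (w k) * norm (d k)"
    by (simp add: power2_eq_square mult.assoc)
  moreover have "norm (d k) > 0" using step_basic(1)[of k] by simp
  ultimately show ?thesis by simp
qed

lemma step_norm: "norm (x (Suc k) - x k) = tau k * norm (d k)"
  using step_basic(2,3)[of k] by simp

lemma w_bound:
  assumes "bounded S"
  shows "\<exists>G. \<forall>k. x k \<in> S \<longrightarrow> norm (w k) \<le> G"
proof -
  have "compact (closure S)" using assms by simp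
  then obtain e L G where e: "e > 0" "\<forall>q\<in>closure S. uqs \<phi> (ball q e) L G"
    using locuqs_uniform[OF loc] by blast
  have "norm (w k) \<le> G" if "x k \<in> S" for k
    using clarke_upper(1)[of \<phi> "x k" e L G "w k"] e that closure_subset cont subgrad by blast
  then show ?thesis by blast
qed

lemma bounded_shift:
  assumes "bounded (range (\<lambda>j. x (s j)))"
  shows "bounded (range (\<lambda>j. x (s j + i)))"
proof (induction i)
  case 0 then show ?case using assms by simp
next
  case (Suc i)
  obtain G where G: "\<forall>k. x k \<in> range (\<lambda>j. x (s j + i)) \<longrightarrow> norm (w k) \<le> G"
    using w_bound[OF Suc.IH] by blast
  obtain B where B: "\<forall>j. norm (x (s j + i)) \<le> B" using Suc.IH unfolding bounded_iff by blast
  have "norm (x (s j + Suc i)) \<le> B + T * (G / a)" for j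
  proof -
    let ?k = "s j + i"
    have wk: "norm (w ?k) \<le> G" using G by blast
    have "norm (d ?k) \<le> G / a" using d_le_w[of ?k] wk apos by (simp add: pos_le_divide_eq mult.commute)
    then have "tau ?k * norm (d ?k) \<le> T * (G / a)"
      using tauT[of ?k] step_basic(3)[of ?k] by (meson mult_mono norm_ge_zero order_trans less_imp_le)
    then have "norm (x (Suc ?k) - x ?k) \<le> T * (G / a)" using step_norm by simp
    moreover have "norm (x (Suc ?k)) \<le> norm (x ?k) + norm (x (Suc ?k) - x ?k)"
      by (metis add.commute diff_add_cancel norm_triangle_ineq)
    ultimately show ?thesis using B[rule_format, of j] by simp
  qed
  then show ?case unfolding bounded_iff by blast
qed

end

context nsm begin

lemma T_pos: "T > 0" using tauT[of 0] step_basic(3)[of 0] by simp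

lemma tau_lower:
  fixes s :: "nat \<Rightarrow> nat"
  assumes bd: "bounded (range (\<lambda>j. x (s j)))"
  shows "\<exists>t>0. \<forall>j. tau (s j) \<ge> t"
proof -
  let ?K = "closure (range (\<lambda>j. x (s j)))"
  have cK: "compact ?K" using bd by simp
  obtain e L G where e: "e > 0" "\<forall>q\<in>?K. uqs \<phi> (ball q e) L G"
    using locuqs_uniform[OF loc cK] by blast
  define L' where "L' = \<bar>L\<bar> + 1"
  have L': "L' > 0" "L \<le> L'" unfolding L'_def by linarith+
  have U: "uqs \<phi> (ball (x (s j)) e) L' G" for j
  proof -
    have "x (s j) \<in> ?K" by (rule subsetD[OF closure_subset]) simp
    then have "uqs \<phi> (ball (x (s j)) e) L G" using e(2) by blast
    then show ?thesis using L'(2) by (rule uqs_mono[OF _ subset_refl _ order_refl])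
  qed
  have wG: "norm (w (s j)) \<le> G" for j
    using clarke_upper(1)[OF U e(1) cont subgrad] .
  define D where "D = G / a + 1"
  have dD: "norm (d (s j)) < D" for j
  proof -
    have "a * norm (d (s j)) \<le> G" using d_le_w[of "s j"] wG[of j] by linarith
    then have "norm (d (s j)) * a \<le> G" by (simp add: mult.commute)
    then have "norm (d (s j)) \<le> G / a" by (subst pos_le_divide_eq[OF apos])
    then show ?thesis unfolding D_def by simp
  qed
  have D: "D > 0" using dD[of 0] norm_ge_zero[of "d (s 0)"] by linarith
  define t where "t = min \<tau>min (min (\<beta> * e / D) (\<beta> * (1 - \<sigma>) * a / L'))"
  have p1: "\<beta> * e / D > 0" using par e(1) D by simp
  have p2: "\<beta> * (1 - \<sigma>) * a / L' > 0" using par L' apos by simp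
  have tpos: "t > 0" unfolding t_def using par(1) p1 p2 by linarith
  have "tau (s j) \<ge> t" for j
  proof -
    let ?k = "s j"
    let ?t' = "tau ?k / \<beta>"
    have dpos: "norm (d ?k) > 0" using step_basic(1)[of ?k] by simp
    have tk: "tau ?k > 0" using step_basic(3) .
    have t'pos: "?t' > 0" using tk par by simp
    have tt': "tau ?k = \<beta> * ?t'" using par by simp
    consider (a) "tau ?k \<ge> \<tau>min" | (b) "\<not> (\<phi> (x ?k + ?t' *\<^sub>R d ?k) \<le> V ?k + \<sigma> * ?t' * (w ?k \<bullet> d ?k))"
      using step_basic(5)[of ?k] by blast
    then show ?thesis
    proof cases
      case a then show ?thesis unfolding t_def by linarith
    next
      case b
      show ?thesis
      proof (cases "?t' * norm (d ?k) < e")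
        case False
        then have "e \<le> ?t' * norm (d ?k)" by simp
        also have "\<dots> \<le> ?t' * D" using dD[of j] t'pos by (intro mult_left_mono) auto
        finally have "e / D \<le> ?t'" using D by (simp add: divide_le_eq)
        then have "\<beta> * (e / D) \<le> \<beta> * ?t'" using par by (intro mult_left_mono) auto
        then have "\<beta> * e / D \<le> tau ?k" using tt' by simp
        then show ?thesis unfolding t_def by linarith
      next
        case True
        let ?h = "?t' *\<^sub>R d ?k"
        have nh: "norm ?h = ?t' * norm (d ?k)" using t'pos by (simp only: norm_scaleR abs_of_pos)
        then have hn: "norm ?h < e" using True by simp
        have desc: "\<phi> (x ?k + ?h) \<le> \<phi> (x ?k) + w ?k \<bullet> ?h + L' * (norm ?h)\<^sup>2"
          using clarke_upper(2)[OF U[of j] e(1) cont subgrad hn] .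
        have "\<phi> (x ?k) + \<sigma> * ?t' * (w ?k \<bullet> d ?k) \<le> V ?k + \<sigma> * ?t' * (w ?k \<bullet> d ?k)"
          using phi_le_V[of ?k] by simp
        also have "\<dots> < \<phi> (x ?k + ?h)" using b by simp
        also have "\<dots> \<le> \<phi> (x ?k) + ?t' * (w ?k \<bullet> d ?k) + L' * (?t' * norm (d ?k))\<^sup>2"
          using desc by (simp only: nh inner_scaleR_right)
        finally have A: "\<phi> (x ?k) + \<sigma> * ?t' * (w ?k \<bullet> d ?k) < \<phi> (x ?k) + ?t' * (w ?k \<bullet> d ?k) + L' * (?t' * norm (d ?k))\<^sup>2" .
        define tt where "tt = ?t'"
        define q where "q = w ?k \<bullet> d ?k"
        define n where "n = norm (d ?k)"
        have ttp: "tt > 0" unfolding tt_def using t'pos .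
        have np: "n > 0" unfolding n_def using dpos .
        have qle: "q \<le> - a * n\<^sup>2" unfolding q_def n_def using ha[of ?k] .
        have A': "\<sigma> * tt * q < tt * q + L' * (tt * n)\<^sup>2" using A unfolding tt_def q_def n_def by simp
        have e1: "tt * q - \<sigma> * tt * q + L' * (tt * n)\<^sup>2 = tt * ((1 - \<sigma>) * q + L' * tt * n\<^sup>2)"
          by (simp add: power2_eq_square algebra_simps)
        have "0 < tt * ((1 - \<sigma>) * q + L' * tt * n\<^sup>2)" using A' e1 by linarith
        then have B: "0 < (1 - \<sigma>) * q + L' * tt * n\<^sup>2" using ttp by (simp add: zero_less_mult_iff)
        have "(1 - \<sigma>) * q \<le> (1 - \<sigma>) * (- a * n\<^sup>2)"
          using qle par by (intro mult_left_mono) auto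
        then have "0 < (1 - \<sigma>) * (- a * n\<^sup>2) + L' * tt * n\<^sup>2" using B by linarith
        also have "\<dots> = (L' * tt - (1 - \<sigma>) * a) * n\<^sup>2" by (simp add: algebra_simps)
        finally have "0 < (L' * tt - (1 - \<sigma>) * a) * n\<^sup>2" .
        then have "(1 - \<sigma>) * a < L' * tt" using np by (simp add: zero_less_mult_iff)
        then have "(1 - \<sigma>) * a / L' < tt" using L'(1) by (simp add: divide_less_eq mult.commute)
        then have "\<beta> * ((1 - \<sigma>) * a / L') \<le> \<beta> * tt" using par by (intro mult_left_mono) auto
        then have "\<beta> * (1 - \<sigma>) * a / L' \<le> tau ?k" using tt' unfolding tt_def by simp
        then show ?thesis unfolding t_def by linarith
      qed
    qed
  qed
  then show ?thesis using tpos by blast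
qed

end

context nsm begin

lemma grippo:
  fixes s :: "nat \<Rightarrow> nat"
  assumes sm: "strict_mono s" and bd: "bounded (range (\<lambda>j. x (s j)))"
  shows "(\<lambda>j. \<phi> (x (s j))) \<longlonglongrightarrow> Lv" and "(\<lambda>j. dl (s j)) \<longlonglongrightarrow> 0"
proof -
  define N where "N = M + 1"
  define l where "l j = ell \<phi> x m (s j + N)" for j
  have lw: "s j + 1 \<le> l j \<and> l j \<le> s j + N" for j
  proof -
    have "l j \<in> {s j + N - M .. s j + N}" unfolding l_def using ell_props(1) window_props(3) by blast
    then show ?thesis unfolding N_def by auto
  qed
  have lV: "\<phi> (x (l j)) = V (s j + N)" for j unfolding l_def by (rule ell_props(2))
  define K where "K = closure (\<Union>i\<in>{..N}. range (\<lambda>j. x (s j + i)))"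
  have bK: "bounded (\<Union>i\<in>{..N}. range (\<lambda>j. x (s j + i)))"
    using bounded_shift[OF bd] by (intro bounded_UN) auto
  then have cK: "compact K" unfolding K_def by simp
  have xK: "x (s j + i) \<in> K" if "i \<le> N" for i j
    unfolding K_def by (rule subsetD[OF closure_subset]) (use that in auto)
  have uc: "uniformly_continuous_on K \<phi>"
    by (rule compact_uniformly_continuous[OF continuous_at_imp_continuous_on cK]) (use cont in auto)
  have Vs: "(\<lambda>j. V (s j)) \<longlonglongrightarrow> Lv" using LIMSEQ_subseq_LIMSEQ[OF V_lim sm] by (simp add: o_def)
  have smN: "strict_mono (\<lambda>j. s j + N)" using sm by (simp add: strict_mono_def)
  have VsN: "(\<lambda>j. V (s j + N)) \<longlonglongrightarrow> Lv" using LIMSEQ_subseq_LIMSEQ[OF V_lim smN] by (simp add: o_def)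
  have Vs_ev: "eventually (\<lambda>j. \<bar>V (s j) - Lv\<bar> < \<epsilon>) sequentially" if "\<epsilon> > 0" for \<epsilon>
    using Vs that unfolding tendsto_iff dist_real_def by blast
  have claim: "\<forall>\<epsilon>>0. eventually (\<lambda>j. i \<le> l j - s j \<longrightarrow> \<bar>\<phi> (x (l j - i)) - Lv\<bar> < \<epsilon>) sequentially"
    if "i \<le> N" for i
    using that
  proof (induction i)
    case 0
    show ?case
    proof (intro allI impI)
      fix \<epsilon> :: real assume "\<epsilon> > 0"
      then have "eventually (\<lambda>j. \<bar>V (s j + N) - Lv\<bar> < \<epsilon>) sequentially"
        using VsN unfolding tendsto_iff dist_real_def by blast
      then show "eventually (\<lambda>j. 0 \<le> l j - s j \<longrightarrow> \<bar>\<phi> (x (l j - 0)) - Lv\<bar> < \<epsilon>) sequentially"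
        by (rule eventually_mono) (simp add: lV)
    qed
  next
    case (Suc i)
    then have IH: "\<forall>\<epsilon>>0. eventually (\<lambda>j. i \<le> l j - s j \<longrightarrow> \<bar>\<phi> (x (l j - i)) - Lv\<bar> < \<epsilon>) sequentially"
      by simp
    show ?case
    proof (intro allI impI)
      fix \<epsilon> :: real assume \<epsilon>: "\<epsilon> > 0"
      obtain \<eta> where \<eta>: "\<eta> > 0" "\<forall>u\<in>K. \<forall>v\<in>K. dist v u < \<eta> \<longrightarrow> dist (\<phi> v) (\<phi> u) < \<epsilon> / 2"
        using uc \<epsilon> unfolding uniformly_continuous_on_def by (meson half_gt_zero)
      define \<epsilon>2 where "\<epsilon>2 = min (\<epsilon> / 2) (\<sigma> * a * \<eta>\<^sup>2 / T)"
      have e2: "\<epsilon>2 > 0" unfolding \<epsilon>2_def using \<epsilon> par apos \<eta> T_pos by simp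
      have e2a: "\<epsilon>2 \<le> \<epsilon> / 2" "\<epsilon>2 \<le> \<sigma> * a * \<eta>\<^sup>2 / T" unfolding \<epsilon>2_def
        by (rule min.cobounded1, rule min.cobounded2)
      have h2: "\<epsilon>2 / 2 > 0" using e2 by simp
      have evA: "eventually (\<lambda>j. i \<le> l j - s j \<longrightarrow> \<bar>\<phi> (x (l j - i)) - Lv\<bar> < \<epsilon>2 / 2) sequentially"
        using IH h2 by blast
      have evB: "eventually (\<lambda>j. \<bar>V (s j) - Lv\<bar> < \<epsilon>2 / 2) sequentially" using Vs_ev[OF h2] .
      show "eventually (\<lambda>j. Suc i \<le> l j - s j \<longrightarrow> \<bar>\<phi> (x (l j - Suc i)) - Lv\<bar> < \<epsilon>) sequentially"
        using eventually_conj[OF evA evB]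
      proof (rule eventually_mono)
        fix j assume hj: "(i \<le> l j - s j \<longrightarrow> \<bar>\<phi> (x (l j - i)) - Lv\<bar> < \<epsilon>2 / 2) \<and> \<bar>V (s j) - Lv\<bar> < \<epsilon>2 / 2"
        show "Suc i \<le> l j - s j \<longrightarrow> \<bar>\<phi> (x (l j - Suc i)) - Lv\<bar> < \<epsilon>"
        proof
          assume si: "Suc i \<le> l j - s j"
          define p where "p = l j - Suc i"
          have pge: "s j \<le> p" and pS: "Suc p = l j - i" using si lw[of j] unfolding p_def by auto
          have A: "\<bar>\<phi> (x (Suc p)) - Lv\<bar> < \<epsilon>2 / 2" using hj si pS by simp
          have "\<phi> (x (Suc p)) \<le> V p - dl p" by (rule decrease)
          moreover have "V p \<le> V (s j)" using V_mono[OF pge] .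
          ultimately have dlp: "dl p < \<epsilon>2" using A hj by linarith
          have sq: "(norm (x (Suc p) - x p))\<^sup>2 \<le> T * dl p / (\<sigma> * a)"
          proof -
            have "(norm (x (Suc p) - x p))\<^sup>2 = tau p * (tau p * (norm (d p))\<^sup>2)"
              using step_norm[of p] by (simp add: power2_eq_square algebra_simps)
            also have "\<dots> \<le> T * (tau p * (norm (d p))\<^sup>2)"
              using tauT[of p] step_basic(3)[of p] by (intro mult_right_mono) auto
            also have "\<dots> = T * dl p / (\<sigma> * a)"
              unfolding dl_def using par apos by (simp add: field_simps)
            finally show ?thesis .
          qed
          have "T * dl p / (\<sigma> * a) < T * \<epsilon>2 / (\<sigma> * a)"
            using dlp T_pos par apos by (simp add: divide_strict_right_mono)
          also have "\<dots> \<le> \<eta>\<^sup>2"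
          proof -
            have "T * \<epsilon>2 \<le> T * (\<sigma> * a * \<eta>\<^sup>2 / T)" using e2a(2) T_pos by (intro mult_left_mono) auto
            also have "\<dots> = \<sigma> * a * \<eta>\<^sup>2" using T_pos by simp
            finally show ?thesis using par apos by (simp add: divide_le_eq mult.commute)
          qed
          finally have "(norm (x (Suc p) - x p))\<^sup>2 < \<eta>\<^sup>2" using sq by linarith
          then have stp: "norm (x (Suc p) - x p) < \<eta>" using \<eta>(1) by (simp add: power_less_imp_less_base)
          have p1: "x p \<in> K"
          proof -
            have "x p = x (s j + (p - s j))" using pge by simp
            moreover have "p - s j \<le> N" using lw[of j] pS by linarith
            ultimately show ?thesis using xK by metis
          qed
          have p2: "x (Suc p) \<in> K"
          proof -
            have "x (Suc p) = x (s j + (Suc p - s j))" using pge by simp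
            moreover have "Suc p - s j \<le> N" using lw[of j] pS by linarith
            ultimately show ?thesis using xK by metis
          qed
          have "dist (x p) (x (Suc p)) < \<eta>" using stp by (simp add: dist_norm norm_minus_commute)
          then have "dist (\<phi> (x p)) (\<phi> (x (Suc p))) < \<epsilon> / 2" using \<eta>(2) p1 p2 by blast
          then have "\<bar>\<phi> (x p) - \<phi> (x (Suc p))\<bar> < \<epsilon> / 2" by (simp add: dist_real_def)
          then show "\<bar>\<phi> (x (l j - Suc i)) - Lv\<bar> < \<epsilon>" using A e2a(1) unfolding p_def[symmetric] by linarith
        qed
      qed
    qed
  qed
  have allc: "eventually (\<lambda>j. \<forall>i\<in>{..N}. i \<le> l j - s j \<longrightarrow> \<bar>\<phi> (x (l j - i)) - Lv\<bar> < \<epsilon>) sequentially"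
    if "\<epsilon> > 0" for \<epsilon>
    by (rule eventually_ball_finite) (use claim that in auto)
  show "(\<lambda>j. \<phi> (x (s j))) \<longlonglongrightarrow> Lv"
    unfolding tendsto_iff dist_real_def
  proof (intro allI impI)
    fix \<epsilon> :: real assume "\<epsilon> > 0"
    show "eventually (\<lambda>j. \<bar>\<phi> (x (s j)) - Lv\<bar> < \<epsilon>) sequentially"
      using allc[OF \<open>\<epsilon> > 0\<close>]
    proof (rule eventually_mono)
      fix j assume h: "\<forall>i\<in>{..N}. i \<le> l j - s j \<longrightarrow> \<bar>\<phi> (x (l j - i)) - Lv\<bar> < \<epsilon>"
      have "l j - s j \<in> {..N}" using lw[of j] by auto
      then have "\<bar>\<phi> (x (l j - (l j - s j))) - Lv\<bar> < \<epsilon>" using h by blast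
      moreover have "l j - (l j - s j) = s j" using lw[of j] by auto
      ultimately show "\<bar>\<phi> (x (s j)) - Lv\<bar> < \<epsilon>" by simp
    qed
  qed
  show "(\<lambda>j. dl (s j)) \<longlonglongrightarrow> 0"
    unfolding tendsto_iff dist_real_def
  proof (intro allI impI)
    fix \<epsilon> :: real assume \<epsilon>: "\<epsilon> > 0"
    then have h2: "\<epsilon> / 2 > 0" by simp
    show "eventually (\<lambda>j. \<bar>dl (s j) - 0\<bar> < \<epsilon>) sequentially"
      using eventually_conj[OF allc[OF h2] Vs_ev[OF h2]]
    proof (rule eventually_mono)
      fix j assume h: "(\<forall>i\<in>{..N}. i \<le> l j - s j \<longrightarrow> \<bar>\<phi> (x (l j - i)) - Lv\<bar> < \<epsilon> / 2) \<and> \<bar>V (s j) - Lv\<bar> < \<epsilon> / 2"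
      define i where "i = l j - s j - 1"
      have "i \<in> {..N}" "i \<le> l j - s j" unfolding i_def using lw[of j] by auto
      then have "\<bar>\<phi> (x (l j - i)) - Lv\<bar> < \<epsilon> / 2" using h by blast
      moreover have "l j - i = Suc (s j)" unfolding i_def using lw[of j] by auto
      ultimately have "\<bar>\<phi> (x (Suc (s j))) - Lv\<bar> < \<epsilon> / 2" by simp
      moreover have "\<phi> (x (Suc (s j))) \<le> V (s j) - dl (s j)" by (rule decrease)
      moreover have "dl (s j) \<ge> 0" by (rule dl_nonneg)
      ultimately show "\<bar>dl (s j) - 0\<bar> < \<epsilon>" using h by linarith
    qed
  qed
qed

end

context nsm begin

lemma part_i:
  fixes s :: "nat \<Rightarrow> nat"
  assumes sm: "strict_mono s" and bd0: "bounded (range (x \<circ> s))"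
  shows "(\<exists>t>0. \<forall>j. tau (s j) \<ge> t) \<and>
         (\<lambda>j. norm (x (Suc (s j)) - x (s j))) \<longlonglongrightarrow> 0 \<and>
         (\<lambda>j. norm (w (s j))) \<longlonglongrightarrow> 0 \<and>
         (\<lambda>j. norm (d (s j))) \<longlonglongrightarrow> 0 \<and>
         (\<exists>L. (\<lambda>k. \<phi> (x (ell \<phi> x m k))) \<longlonglongrightarrow> L \<and> (\<lambda>j. \<phi> (x (s j))) \<longlonglongrightarrow> L)"
proof -
  have bd: "bounded (range (\<lambda>j. x (s j)))" using bd0 by (simp add: o_def)
  obtain t0 where t0: "t0 > 0" "\<forall>j. tau (s j) \<ge> t0" using tau_lower[OF bd] by blast
  have c0: "\<sigma> * a * t0 > 0" using par apos t0 by simp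
  have dle: "norm (d (s j)) \<le> sqrt (dl (s j) / (\<sigma> * a * t0))" for j
  proof -
    have "(\<sigma> * a * t0) * (norm (d (s j)))\<^sup>2 \<le> (\<sigma> * a) * tau (s j) * (norm (d (s j)))\<^sup>2"
      using t0 par apos by (intro mult_right_mono) (auto simp: mult.assoc)
    then have "(\<sigma> * a * t0) * (norm (d (s j)))\<^sup>2 \<le> dl (s j)" unfolding dl_def by (simp add: mult.assoc)
    then have "(norm (d (s j)))\<^sup>2 \<le> dl (s j) / (\<sigma> * a * t0)" using c0 by (simp add: pos_le_divide_eq mult.commute)
    then show ?thesis by (simp add: real_le_rsqrt)
  qed
  have glim: "(\<lambda>j. sqrt (dl (s j) / (\<sigma> * a * t0))) \<longlonglongrightarrow> 0"
  proof -
    have c0': "\<sigma> * a * t0 \<noteq> 0" using c0 by linarith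
    have "(\<lambda>j. dl (s j) / (\<sigma> * a * t0)) \<longlonglongrightarrow> 0 / (\<sigma> * a * t0)"
      by (rule tendsto_divide[OF grippo(2)[OF sm bd] tendsto_const c0'])
    then have "(\<lambda>j. sqrt (dl (s j) / (\<sigma> * a * t0))) \<longlonglongrightarrow> sqrt (0 / (\<sigma> * a * t0))"
      by (rule tendsto_real_sqrt)
    then show ?thesis by simp
  qed
  have dlim: "(\<lambda>j. norm (d (s j))) \<longlonglongrightarrow> 0"
    by (rule Lim_null_comparison[OF _ glim]) (use dle in simp)
  have slim: "(\<lambda>j. norm (x (Suc (s j)) - x (s j))) \<longlonglongrightarrow> 0"
  proof (rule Lim_null_comparison[where g="\<lambda>j. T * norm (d (s j))"])
    show "\<forall>\<^sub>F j in sequentially. norm (norm (x (Suc (s j)) - x (s j))) \<le> T * norm (d (s j))"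
    proof (intro always_eventually allI)
      fix j
      have "tau (s j) * norm (d (s j)) \<le> T * norm (d (s j))"
        using tauT[of "s j"] by (intro mult_right_mono) auto
      moreover have "tau (s j) * norm (d (s j)) \<ge> 0" using step_basic(3)[of "s j"] by simp
      ultimately show "norm (norm (x (Suc (s j)) - x (s j))) \<le> T * norm (d (s j))"
        using step_norm[of "s j"] by simp
    qed
    have "(\<lambda>j. T * norm (d (s j))) \<longlonglongrightarrow> T * 0" by (intro tendsto_intros dlim)
    then show "(\<lambda>j. T * norm (d (s j))) \<longlonglongrightarrow> 0" by simp
  qed
  obtain b where b: "b > 0" "\<forall>j. norm (w (s j)) \<le> b * norm (d (s j))" using hb[OF sm bd0] by blast
  have wlim: "(\<lambda>j. norm (w (s j))) \<longlonglongrightarrow> 0"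
  proof (rule Lim_null_comparison[where g="\<lambda>j. b * norm (d (s j))"])
    show "\<forall>\<^sub>F j in sequentially. norm (norm (w (s j))) \<le> b * norm (d (s j))"
      using b by auto
    have "(\<lambda>j. b * norm (d (s j))) \<longlonglongrightarrow> b * 0" by (intro tendsto_intros dlim)
    then show "(\<lambda>j. b * norm (d (s j))) \<longlonglongrightarrow> 0" by simp
  qed
  have "(\<lambda>k. \<phi> (x (ell \<phi> x m k))) \<longlonglongrightarrow> Lv" using V_lim by (simp add: ell_props(2))
  then show ?thesis using t0 slim wlim dlim grippo(1)[OF sm bd] by blast
qed

lemma part_iii:
  assumes y: "y \<in> acc_points x"
  shows "0 \<in> clarke_subdiff \<phi> y"
proof -
  obtain s :: "nat \<Rightarrow> nat" where s: "strict_mono s" "(x \<circ> s) \<longlonglongrightarrow> y"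
    using y unfolding acc_points_def by blast
  have bd: "bounded (range (x \<circ> s))" using s(2) by (rule convergent_imp_bounded)
  have wl: "(\<lambda>j. norm (w (s j))) \<longlonglongrightarrow> 0" using part_i[OF s(1) bd] by blast
  then have wl': "(\<lambda>j. w (s j)) \<longlonglongrightarrow> 0" by (simp add: tendsto_norm_zero_iff)
  have xs: "(\<lambda>j. x (s j)) \<longlonglongrightarrow> y" using s(2) by (simp add: o_def)
  obtain e L G where e: "e > 0" "\<forall>q\<in>cball y 1. uqs \<phi> (ball q e) L G"
    using locuqs_uniform[OF loc compact_cball] by blast
  have q: "\<phi> (y + h) \<le> \<phi> y + L * (norm h)\<^sup>2" if h: "norm h < e / 2" for h
  proof -
    define R where "R j = \<phi> (x (s j)) + w (s j) \<bullet> (y + h - x (s j)) + L * (norm (y + h - x (s j)))\<^sup>2" for j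
    have Rl: "R \<longlonglongrightarrow> \<phi> y + 0 \<bullet> (y + h - y) + L * (norm (y + h - y))\<^sup>2"
      unfolding R_def
      by (intro tendsto_intros isCont_tendsto_compose[OF cont xs] wl' xs)
    have mp: "min 1 (e / 2) > 0" using e(1) by simp
    have ev: "eventually (\<lambda>j. dist (x (s j)) y < min 1 (e / 2)) sequentially"
      using xs mp unfolding tendsto_iff by blast
    have "\<exists>N. \<forall>j\<ge>N. \<phi> (y + h) \<le> R j"
    proof -
      obtain N where N: "\<forall>j\<ge>N. dist (x (s j)) y < min 1 (e / 2)" using ev unfolding eventually_sequentially by blast
      have "\<phi> (y + h) \<le> R j" if "j \<ge> N" for j
      proof -
        have dj: "dist (x (s j)) y < 1" "dist (x (s j)) y < e / 2" using N that by auto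
        have inC: "x (s j) \<in> cball y 1" using dj(1) by (simp add: dist_commute less_imp_le)
        have U: "uqs \<phi> (ball (x (s j)) e) L G" using e(2) inC by blast
        have "norm (y + h - x (s j)) \<le> norm h + norm (y - x (s j))"
          using norm_triangle_ineq[of h "y - x (s j)"] by (simp add: algebra_simps)
        also have "\<dots> < e" using h dj(2) by (simp add: dist_norm norm_minus_commute)
        finally have hn: "norm (y + h - x (s j)) < e" .
        have "\<phi> (x (s j) + (y + h - x (s j))) \<le> R j"
          unfolding R_def by (rule clarke_upper(2)[OF U e(1) cont subgrad hn])
        then show ?thesis by simp
      qed
      then show ?thesis by blast
    qed
    then have "\<phi> (y + h) \<le> \<phi> y + 0 \<bullet> (y + h - y) + L * (norm (y + h - y))\<^sup>2"
      by (rule LIMSEQ_le_const[OF Rl])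
    then show ?thesis by simp
  qed
  show ?thesis by (rule stationary_of_upper_quad[of "e / 2"]) (use e(1) q in auto)
qed

lemma steps_to_zero:
  assumes bx: "bounded (range x)"
  shows "(\<lambda>n. norm (x (Suc n) - x n)) \<longlonglongrightarrow> 0"
proof -
  have "strict_mono (id :: nat \<Rightarrow> nat)" by (simp add: strict_mono_def)
  moreover have "bounded (range (x \<circ> id))" using bx by simp
  ultimately show ?thesis using part_i[of id] by simp
qed

lemma part_iv:
  assumes bx: "bounded (range x)"
    and iso: "\<exists>y\<in>acc_points x. \<exists>e>0. \<forall>z\<in>acc_points x. z \<noteq> y \<longrightarrow> dist z y \<ge> e"
  shows "\<exists>y. x \<longlonglongrightarrow> y \<and> 0 \<in> clarke_subdiff \<phi> y"
proof -
  obtain y e where y: "y \<in> clust x" "e > 0" "\<forall>z\<in>clust x. z \<noteq> y \<longrightarrow> dist z y \<ge> e"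
    using iso unfolding acc_points_clust by blast
  have con: "connected (clust x)" using clust_connected[OF bx steps_to_zero[OF bx]] .
  have "clust x = {y}" by (rule isolated_clust_single[OF con y])
  then have "x \<longlonglongrightarrow> y" by (rule single_clust_converges[OF bx])
  moreover have "0 \<in> clarke_subdiff \<phi> y" using part_iii y(1) acc_points_clust by blast
  ultimately show ?thesis by blast
qed

end

context nsm begin

lemma mu_bound:
  defines "\<mu> \<equiv> \<lambda>n. Min (dl ` {..<n * (M + 1)})"
  shows "real n * \<mu> n \<le> V 0 - Lv"
proof -
  have "V (n * (M + 1)) \<le> V 0 - real n * \<mu> n" for n
  proof (induction n)
    case 0 then show ?case by simp
  next
    case (Suc n)
    define k where "k = n * (M + 1)"
    obtain j where j: "j \<in> {k..k+M}" "V (k + M + 1) \<le> V k - dl j" using block[of k] by blast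
    have kk: "Suc n * (M + 1) = k + M + 1" unfolding k_def by simp
    have fin: "finite (dl ` {..<Suc n * (M + 1)})" by simp
    have jin: "j < Suc n * (M + 1)" using j(1) kk by simp
    have m1: "\<mu> (Suc n) \<le> dl j" unfolding \<mu>_def using fin jin by (intro Min_le) auto
    have m2: "real n * \<mu> (Suc n) \<le> real n * \<mu> n"
    proof (cases "n = 0")
      case True then show ?thesis by simp
    next
      case False
      have "\<mu> (Suc n) \<le> \<mu> n" unfolding \<mu>_def
      proof (rule Min_antimono)
        show "dl ` {..<n * (M + 1)} \<subseteq> dl ` {..<Suc n * (M + 1)}" by auto
        show "dl ` {..<n * (M + 1)} \<noteq> {}" using False by auto
        show "finite (dl ` {..<Suc n * (M + 1)})" by simp
      qed
      then show ?thesis by (simp add: mult_left_mono)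
    qed
    have "V (Suc n * (M + 1)) \<le> V k - dl j" unfolding kk by (rule j(2))
    also have "\<dots> \<le> V 0 - real n * \<mu> n - dl j" using Suc.IH unfolding k_def by simp
    also have "\<dots> \<le> V 0 - real (Suc n) * \<mu> (Suc n)"
    proof -
      have "real (Suc n) * \<mu> (Suc n) = real n * \<mu> (Suc n) + \<mu> (Suc n)" by (simp add: algebra_simps)
      then show ?thesis using m1 m2 by linarith
    qed
    finally show ?case .
  qed
  note A = this
  show ?thesis using A[of n] V_ge_Lv[of "n * (M + 1)"] by linarith
qed

lemma part_ii_rate:
  assumes bx: "bounded (range x)"
  shows "\<exists>c>0. \<forall>k. (MIN j\<in>{..k}. norm (x (Suc j) - x j) + norm (w j) + norm (d j)) \<le> c / sqrt (real k + 1)"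
proof -
  have sid: "strict_mono (id :: nat \<Rightarrow> nat)" by (simp add: strict_mono_def)
  have bid: "bounded (range (x \<circ> id))" using bx by simp
  obtain t0 where t0: "t0 > 0" "\<forall>j. tau j \<ge> t0" using tau_lower[of id] bx by auto
  obtain b where b: "b > 0" "\<forall>j. norm (w j) \<le> b * norm (d j)" using hb[OF sid bid] by auto
  define C where "C = T + b + 1"
  have Cp: "C > 0" unfolding C_def using T_pos b by simp
  define e where "e j = norm (x (Suc j) - x j) + norm (w j) + norm (d j)" for j
  have e0: "e j \<ge> 0" for j unfolding e_def by simp
  have eC: "e j \<le> C * norm (d j)" for j
  proof -
    have "norm (x (Suc j) - x j) \<le> T * norm (d j)"
      using step_norm[of j] tauT[of j] by (simp add: mult_right_mono)
    then show ?thesis unfolding e_def C_def using b(2)[rule_format, of j] by (simp add: algebra_simps)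
  qed
  have c0: "\<sigma> * a * t0 > 0" using par apos t0 by simp
  define Q where "Q = C\<^sup>2 / (\<sigma> * a * t0)"
  have Qp: "Q \<ge> 0" unfolding Q_def using c0 by simp
  have eQ: "e j \<le> sqrt (Q * dl j)" for j
  proof -
    have "(\<sigma> * a * t0) * (norm (d j))\<^sup>2 \<le> (\<sigma> * a) * tau j * (norm (d j))\<^sup>2"
      using t0 par apos by (intro mult_right_mono) (auto simp: mult.assoc)
    then have dd: "(\<sigma> * a * t0) * (norm (d j))\<^sup>2 \<le> dl j" unfolding dl_def by (simp add: mult.assoc)
    have "(e j)\<^sup>2 \<le> (C * norm (d j))\<^sup>2" using eC[of j] e0[of j] by (simp add: power_mono)
    also have "\<dots> = C\<^sup>2 * (norm (d j))\<^sup>2" by (simp add: power_mult_distrib)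
    also have "\<dots> = Q * ((\<sigma> * a * t0) * (norm (d j))\<^sup>2)"
    proof -
      have cne: "\<sigma> * a * t0 \<noteq> 0" using c0 by linarith
      show ?thesis unfolding Q_def using cne by simp
    qed
    also have "\<dots> \<le> Q * dl j" using dd Qp by (simp add: mult_left_mono)
    finally show ?thesis by (simp add: real_le_rsqrt)
  qed
  define D0 where "D0 = V 0 - Lv"
  have D0p: "D0 \<ge> 0" unfolding D0_def using V_ge_Lv[of 0] by simp
  define X where "X = 2 * Q * D0 * (real M + 1)"
  have Xp: "X \<ge> 0" unfolding X_def using Qp D0p by simp
  define c where "c = sqrt X + e 0 * sqrt (real M + 1) + 1"
  have cp: "c > 0" unfolding c_def using Xp e0[of 0] by (simp add: add_nonneg_pos)
  have "(MIN j\<in>{..k}. e j) \<le> c / sqrt (real k + 1)" for k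
  proof -
    have sk: "sqrt (real k + 1) > 0" by simp
    define n where "n = (k + 1) div (M + 1)"
    show ?thesis
    proof (cases "n = 0")
      case True
      have "k + 1 < M + 1"
        using True unfolding n_def by (simp add: div_eq_0_iff)
      then have "real k + 1 \<le> real M + 1" by simp
      then have sq: "sqrt (real k + 1) \<le> sqrt (real M + 1)" by simp
      have "(MIN j\<in>{..k}. e j) \<le> e 0" by (intro Min_le) auto
      also have "\<dots> = e 0 * sqrt (real k + 1) / sqrt (real k + 1)" using sk by simp
      also have "\<dots> \<le> e 0 * sqrt (real M + 1) / sqrt (real k + 1)"
        using sq e0[of 0] sk by (intro divide_right_mono mult_left_mono) auto
      also have "\<dots> \<le> c / sqrt (real k + 1)"
        unfolding c_def using sk Xp by (intro divide_right_mono) auto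
      finally show ?thesis .
    next
      case False
      define S where "S = {..<n * (M + 1)}"
      have nM: "n * (M + 1) \<le> k + 1" unfolding n_def using div_mult_mod_eq[of "k+1" "M+1"] by linarith
      have kn: "k + 1 < (n + 1) * (M + 1)"
      proof -
        have "k + 1 = n * (M + 1) + (k + 1) mod (M + 1)" unfolding n_def using div_mult_mod_eq[of "k+1" "M+1"] by linarith
        moreover have "(k + 1) mod (M + 1) < M + 1" by simp
        moreover have "(n + 1) * (M + 1) = n * (M + 1) + (M + 1)" by simp
        ultimately show ?thesis by linarith
      qed
      have Sne: "S \<noteq> {}" unfolding S_def using False by auto
      obtain js where js: "js \<in> S" "dl js = Min (dl ` S)"
      proof -
        have "Min (dl ` S) \<in> dl ` S" using Sne unfolding S_def by (intro Min_in) auto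
        then show ?thesis using that by auto
      qed
      have jsk: "js \<le> k" using js(1) nM unfolding S_def by simp
      have mu: "real n * dl js \<le> D0" using mu_bound[of n] js(2) unfolding S_def D0_def by simp
      have dlp: "dl js \<ge> 0" by (rule dl_nonneg)
      have rk: "real k + 1 \<le> 2 * real n * (real M + 1)"
      proof -
        have "(n + 1) * (M + 1) \<le> (2 * n) * (M + 1)" using False by (intro mult_right_mono) auto
        then have "k + 1 \<le> 2 * n * (M + 1)" using kn by linarith
        then have "real (k + 1) \<le> real (2 * n * (M + 1))" by (simp only: of_nat_le_iff)
        moreover have "real (2 * n * (M + 1)) = 2 * real n * (real M + 1)" by (simp add: algebra_simps)
        moreover have "real (k + 1) = real k + 1" by simp
        ultimately show ?thesis by linarith
      qed
      have "(real k + 1) * (Q * dl js) \<le> (2 * real n * (real M + 1)) * (Q * dl js)"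
        using rk Qp dlp by (intro mult_right_mono) auto
      also have "\<dots> = 2 * Q * (real M + 1) * (real n * dl js)" by (simp add: algebra_simps)
      also have "\<dots> \<le> 2 * Q * (real M + 1) * D0" using mu Qp by (intro mult_left_mono) auto
      also have "\<dots> = X" unfolding X_def by (simp add: algebra_simps)
      finally have "(real k + 1) * (Q * dl js) \<le> X" .
      then have qx: "Q * dl js \<le> X / (real k + 1)" by (simp add: pos_le_divide_eq mult.commute)
      have "(MIN j\<in>{..k}. e j) \<le> e js" using jsk by (intro Min_le) auto
      also have "\<dots> \<le> sqrt (Q * dl js)" by (rule eQ)
      also have "\<dots> \<le> sqrt (X / (real k + 1))" using qx by simp
      also have "\<dots> = sqrt X / sqrt (real k + 1)" by (simp add: real_sqrt_divide)
      also have "\<dots> \<le> c / sqrt (real k + 1)"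
        unfolding c_def using sk e0[of 0] by (intro divide_right_mono) auto
      finally show ?thesis .
    qed
  qed
  then show ?thesis using cp unfolding e_def by blast
qed

end

theorem theorem4p5:
  fixes \<phi> :: "'a::euclidean_space \<Rightarrow> real"
    and x w d :: "nat \<Rightarrow> 'a" and taubar tau :: "nat \<Rightarrow> real" and m :: "nat \<Rightarrow> nat"
    and \<tau>min \<sigma> \<beta> :: real
  assumes uC2: "upper_C2 TYPE('c::topological_space) \<phi>"
    and bdd: "bdd_below (range \<phi>)"
    and par: "\<tau>min > 0" "0 < \<sigma>" "\<sigma> < 1" "0 < \<beta>" "\<beta> < 1"
    and subgrad: "\<And>k. (\<forall>i<k. w i \<noteq> 0) \<Longrightarrow> w k \<in> clarke_subdiff \<phi> (x k)"
    and step: "\<And>k. (\<forall>i\<le>k. w i \<noteq> 0) \<Longrightarrow> nsm_step \<phi> \<tau>min \<sigma> \<beta> x w d taubar tau m k"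
    and hyp_a: "\<exists>a>0. \<forall>k. (\<forall>i\<le>k. w i \<noteq> 0) \<longrightarrow> w k \<bullet> d k \<le> - a * (norm (d k))\<^sup>2"
    and hyp_b: "(\<forall>k. w k \<noteq> 0) \<Longrightarrow>
       \<forall>s::nat \<Rightarrow> nat. strict_mono s \<and> bounded (range (x \<circ> s)) \<longrightarrow>
         (\<exists>b>0. \<forall>j. norm (w (s j)) \<le> b * norm (d (s j)))"
    and hyp_c: "\<exists>M::nat. \<forall>k. (\<forall>i\<le>k. w i \<noteq> 0) \<longrightarrow> m (Suc k) \<le> min (m k + 1) M"
  shows "(\<exists>K. (\<forall>i<K. w i \<noteq> 0) \<and> w K = 0 \<and> 0 \<in> clarke_subdiff \<phi> (x K))
       \<or> ((\<forall>k. w k \<noteq> 0) \<and>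
          (bdd_above (range tau) \<longrightarrow>
            (\<forall>s::nat \<Rightarrow> nat. strict_mono s \<and> bounded (range (x \<circ> s)) \<longrightarrow>
               (\<exists>t>0. \<forall>j. tau (s j) \<ge> t) \<and>
               (\<lambda>j. norm (x (Suc (s j)) - x (s j))) \<longlonglongrightarrow> 0 \<and>
               (\<lambda>j. norm (w (s j))) \<longlonglongrightarrow> 0 \<and>
               (\<lambda>j. norm (d (s j))) \<longlonglongrightarrow> 0 \<and>
               (\<exists>L. (\<lambda>k. \<phi> (x (ell \<phi> x m k))) \<longlonglongrightarrow> L \<and>
                    (\<lambda>j. \<phi> (x (s j))) \<longlonglongrightarrow> L)) \<and>
            (bounded (range x) \<longrightarrow>
               acc_points x \<noteq> {} \<and> closed (acc_points x) \<and> connected (acc_points x) \<and>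
               (\<exists>c>0. \<forall>k. (MIN j\<in>{..k}. norm (x (Suc j) - x j) + norm (w j) + norm (d j))
                          \<le> c / sqrt (real k + 1))) \<and>
            (\<forall>y\<in>acc_points x. 0 \<in> clarke_subdiff \<phi> y) \<and>
            (bounded (range x) \<and>
             (\<exists>y\<in>acc_points x. \<exists>e>0. \<forall>z\<in>acc_points x. z \<noteq> y \<longrightarrow> dist z y \<ge> e) \<longrightarrow>
               (\<exists>y. x \<longlonglongrightarrow> y \<and> 0 \<in> clarke_subdiff \<phi> y))))"
proof -
  consider (stop) "\<exists>K. w K = 0" | (run) "\<forall>k. w k \<noteq> 0" by blast
  then show ?thesis
  proof cases
    case stop
    define K where "K = (LEAST K. w K = 0)"
    have wK: "w K = 0" unfolding K_def using stop by (rule LeastI_ex)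
    have bef: "\<forall>i<K. w i \<noteq> 0" unfolding K_def using not_less_Least by blast
    have "w K \<in> clarke_subdiff \<phi> (x K)" using subgrad bef by blast
    then have "0 \<in> clarke_subdiff \<phi> (x K)" using wK by simp
    then show ?thesis using bef wK by blast
  next
    case run
    have rhs: "bdd_above (range tau) \<longrightarrow>
            (\<forall>s::nat \<Rightarrow> nat. strict_mono s \<and> bounded (range (x \<circ> s)) \<longrightarrow>
               (\<exists>t>0. \<forall>j. tau (s j) \<ge> t) \<and>
               (\<lambda>j. norm (x (Suc (s j)) - x (s j))) \<longlonglongrightarrow> 0 \<and>
               (\<lambda>j. norm (w (s j))) \<longlonglongrightarrow> 0 \<and>
               (\<lambda>j. norm (d (s j))) \<longlonglongrightarrow> 0 \<and>
               (\<exists>L. (\<lambda>k. \<phi> (x (ell \<phi> x m k))) \<longlonglongrightarrow> L \<and>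
                    (\<lambda>j. \<phi> (x (s j))) \<longlonglongrightarrow> L)) \<and>
            (bounded (range x) \<longrightarrow>
               acc_points x \<noteq> {} \<and> closed (acc_points x) \<and> connected (acc_points x) \<and>
               (\<exists>c>0. \<forall>k. (MIN j\<in>{..k}. norm (x (Suc j) - x j) + norm (w j) + norm (d j))
                          \<le> c / sqrt (real k + 1))) \<and>
            (\<forall>y\<in>acc_points x. 0 \<in> clarke_subdiff \<phi> y) \<and>
            (bounded (range x) \<and>
             (\<exists>y\<in>acc_points x. \<exists>e>0. \<forall>z\<in>acc_points x. z \<noteq> y \<longrightarrow> dist z y \<ge> e) \<longrightarrow>
               (\<exists>y. x \<longlonglongrightarrow> y \<and> 0 \<in> clarke_subdiff \<phi> y))"
    proof
      assume "bdd_above (range tau)"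
      then obtain T where T: "\<And>k. tau k \<le> T" unfolding bdd_above_def by auto
      obtain a where a: "a > 0" "\<forall>k. (\<forall>i\<le>k. w i \<noteq> 0) \<longrightarrow> w k \<bullet> d k \<le> - a * (norm (d k))\<^sup>2"
        using hyp_a by blast
      obtain M where M: "\<forall>k. (\<forall>i\<le>k. w i \<noteq> 0) \<longrightarrow> m (Suc k) \<le> min (m k + 1) M"
        using hyp_c by blast
      interpret N: nsm \<phi> x w d taubar tau m \<tau>min \<sigma> \<beta> a T M
      proof
        show "locuqs \<phi>" using uC2 by (rule upper_C2_locuqs)
        show "bdd_below (range \<phi>)" by (rule bdd)
        show "\<tau>min > 0" "0 < \<sigma>" "\<sigma> < 1" "0 < \<beta>" "\<beta> < 1" using par by auto
        show "\<And>k. w k \<in> clarke_subdiff \<phi> (x k)" using subgrad run by blast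
        show "\<And>k. nsm_step \<phi> \<tau>min \<sigma> \<beta> x w d taubar tau m k" using step run by blast
        show "a > 0" by (rule a(1))
        show "\<And>k. w k \<bullet> d k \<le> - a * (norm (d k))\<^sup>2" using a(2) run by blast
        show "\<And>s :: nat \<Rightarrow> nat. strict_mono s \<Longrightarrow> bounded (range (x \<circ> s)) \<Longrightarrow> \<exists>b>0. \<forall>j. norm (w (s j)) \<le> b * norm (d (s j))"
          using hyp_b run by blast
        show "\<And>k. m (Suc k) \<le> min (m k + 1) M" using M run by blast
        show "\<And>k. tau k \<le> T" by (rule T)
      qed
      have i: "\<forall>s::nat \<Rightarrow> nat. strict_mono s \<and> bounded (range (x \<circ> s)) \<longrightarrow>
               (\<exists>t>0. \<forall>j. tau (s j) \<ge> t) \<and>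
               (\<lambda>j. norm (x (Suc (s j)) - x (s j))) \<longlonglongrightarrow> 0 \<and>
               (\<lambda>j. norm (w (s j))) \<longlonglongrightarrow> 0 \<and>
               (\<lambda>j. norm (d (s j))) \<longlonglongrightarrow> 0 \<and>
               (\<exists>L. (\<lambda>k. \<phi> (x (ell \<phi> x m k))) \<longlonglongrightarrow> L \<and>
                    (\<lambda>j. \<phi> (x (s j))) \<longlonglongrightarrow> L)"
        using N.part_i by blast
      have ii: "bounded (range x) \<longrightarrow>
               acc_points x \<noteq> {} \<and> closed (acc_points x) \<and> connected (acc_points x) \<and>
               (\<exists>c>0. \<forall>k. (MIN j\<in>{..k}. norm (x (Suc j) - x j) + norm (w j) + norm (d j))
                          \<le> c / sqrt (real k + 1))"
      proof
        assume bx: "bounded (range x)"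
        have sid: "strict_mono (id :: nat \<Rightarrow> nat)" by (simp add: strict_mono_def)
        obtain r2 y where "strict_mono r2" "(x \<circ> (id \<circ> r2)) \<longlonglongrightarrow> y" "y \<in> clust x"
          using subseq_conv[OF bx sid] by blast
        then have ne: "acc_points x \<noteq> {}" using acc_points_clust by blast
        have cl: "closed (acc_points x)" using clust_closed acc_points_clust by metis
        have co: "connected (acc_points x)"
          using clust_connected[OF bx N.steps_to_zero[OF bx]] acc_points_clust by metis
        show "acc_points x \<noteq> {} \<and> closed (acc_points x) \<and> connected (acc_points x) \<and>
               (\<exists>c>0. \<forall>k. (MIN j\<in>{..k}. norm (x (Suc j) - x j) + norm (w j) + norm (d j))
                          \<le> c / sqrt (real k + 1))"
          using ne cl co N.part_ii_rate[OF bx] by blast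
      qed
      have iii: "\<forall>y\<in>acc_points x. 0 \<in> clarke_subdiff \<phi> y" using N.part_iii by blast
      have iv: "bounded (range x) \<and>
             (\<exists>y\<in>acc_points x. \<exists>e>0. \<forall>z\<in>acc_points x. z \<noteq> y \<longrightarrow> dist z y \<ge> e) \<longrightarrow>
               (\<exists>y. x \<longlonglongrightarrow> y \<and> 0 \<in> clarke_subdiff \<phi> y)"
        using N.part_iv by blast
      show "(\<forall>s::nat \<Rightarrow> nat. strict_mono s \<and> bounded (range (x \<circ> s)) \<longrightarrow>
               (\<exists>t>0. \<forall>j. tau (s j) \<ge> t) \<and>
               (\<lambda>j. norm (x (Suc (s j)) - x (s j))) \<longlonglongrightarrow> 0 \<and>
               (\<lambda>j. norm (w (s j))) \<longlonglongrightarrow> 0 \<and>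
               (\<lambda>j. norm (d (s j))) \<longlonglongrightarrow> 0 \<and>
               (\<exists>L. (\<lambda>k. \<phi> (x (ell \<phi> x m k))) \<longlonglongrightarrow> L \<and>
                    (\<lambda>j. \<phi> (x (s j))) \<longlonglongrightarrow> L)) \<and>
            (bounded (range x) \<longrightarrow>
               acc_points x \<noteq> {} \<and> closed (acc_points x) \<and> connected (acc_points x) \<and>
               (\<exists>c>0. \<forall>k. (MIN j\<in>{..k}. norm (x (Suc j) - x j) + norm (w j) + norm (d j))
                          \<le> c / sqrt (real k + 1))) \<and>
            (\<forall>y\<in>acc_points x. 0 \<in> clarke_subdiff \<phi> y) \<and>
            (bounded (range x) \<and>
             (\<exists>y\<in>acc_points x. \<exists>e>0. \<forall>z\<in>acc_points x. z \<noteq> y \<longrightarrow> dist z y \<ge> e) \<longrightarrow>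
               (\<exists>y. x \<longlonglongrightarrow> y \<and> 0 \<in> clarke_subdiff \<phi> y))"
        using i ii iii iv by blast
    qed
    show ?thesis using run rhs by blast
  qed
qed

end
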